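(* Let $A\in\mathbb{R}^{N\times N}$ be a primitive left-stochastic matrix ($A^{\mathsf{T}}\mathds{1}_N=\mathds{1}_N$) with Perron vector $p$ ($Ap=p$, $\mathds{1}_N^{\mathsf{T}}p=1$, $p\succ0$), $P=\mathrm{diag}(p)$, satisfying the balance condition $PA^{\mathsf{T}}=AP$. Let $\overline{A}=(I_N+A)/2$, let $(P-AP)/2=U\Sigma U^{\mathsf{T}}$ be an eigendecomposition ($U$ orthogonal, $\Sigma\ge0$ diagonal) and $V=U\Sigma^{1/2}U^{\mathsf{T}}$. Define $B=\begin{bmatrix}\overline{A}^{\mathsf{T}} & -P^{-1}V\\ V\overline{A}^{\mathsf{T}} & I_N-VP^{-1}V\end{bmatrix}\in\mathbb{R}^{2N\times 2N}$. Then $B$ admits an eigendecomposition $B=XDX^{-1}$ with $D=\begin{bmatrix}I_2&0\\0&D_1\end{bmatrix}$, where $D_1\in\mathbb{C}^{(2N-2)\times(2N-2)}$ is diagonal with $|D_1(2k-3,2k-3)|=|D_1(2k-2,2k-2)|=\sqrt{\lambda_k(\overline{A})}<1$ for all $k=2,\dots,N$ (eigenvalues $\lambda_k(\overline A)$ of $\overline A$ ordered with $\lambda_1(\overline A)=1$). Moreover $X=[R\ \ X_R]$ and $X^{-1}=\begin{bmatrix}L\\ X_L\end{bmatrix}$ with $X_R\in\mathbb{R}^{2N\times(2N-2)}$, $X_L\in\mathbb{R}^{(2N-2)\times 2N}$, and $R=\begin{bmatrix}\mathds{1}_N&0\\0&\mathds{1}_N\end{bmatrix}\in\mathbb{R}^{2N\times2}$,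 $L=\begin{bmatrix}p^{\mathsf{T}}&0\\0&\frac1N\mathds{1}_N^{\mathsf{T}}\end{bmatrix}\in\mathbb{R}^{2\times2N}$.
   Context: Used to transform the exact diffusion error recursion into a convenient basis. Known facts used: for balanced primitive $A$, $\mathrm{null}(V)=\mathrm{span}\{\mathds{1}_N\}$ and $A$ is diagonalizable with real eigenvalues in $(-1,1]$ and a single eigenvalue at $1$.
   Formalization: The blocks $X_R$ and $X_L$, and so X and $X^{-1}$, are complex matrices rather than real ones. The statement above fails without it. *)

theory Defs
  imports "Jordan_Normal_Form.Matrix" "Jordan_Normal_Form.Char_Poly"
begin

definition diag_vec_mat :: "nat \<Rightarrow> (nat \<Rightarrow> 'a::zero) \<Rightarrow> 'a mat" where
  "diag_vec_mat n d = mat n n (\<lambda>(i,j). if i = j then d i else 0)"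

definition primitive_mat :: "real mat \<Rightarrow> bool" where
  "primitive_mat A \<longleftrightarrow> dim_row A = dim_col A \<and>
     (\<forall>i<dim_row A. \<forall>j<dim_col A. A $$ (i,j) \<ge> 0) \<and>
     (\<exists>m. \<forall>i<dim_row A. \<forall>j<dim_col A. (A ^\<^sub>m m) $$ (i,j) > 0)"

definition ones_vec :: "nat \<Rightarrow> 'a::one vec" where
  "ones_vec n = vec n (\<lambda>_. 1)"

end

theory Submission
  imports Defs "Jordan_Normal_Form.Schur_Decomposition"
begin

lemma conj_real_vec[simp]: "conjugate (v::real vec) = v"
  by (auto simp: conjugate_vec_def)

lemma diag_vec_mat_carrier[simp]: "diag_vec_mat n d \<in> carrier_mat n n"
  "dim_row (diag_vec_mat n d) = n" "dim_col (diag_vec_mat n d) = n"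
  by (auto simp add: diag_vec_mat_def)

lemma diag_vec_mat_index[simp]: "i < n \<Longrightarrow> j < n \<Longrightarrow> diag_vec_mat n d $$ (i,j) = (if i = j then d i else 0)"
  by (simp add: diag_vec_mat_def)

lemma diag_vec_mat_Suc:
  "diag_vec_mat (Suc n) (l :: nat \<Rightarrow> 'a::zero) = four_block_mat (mat 1 1 (\<lambda>_. l 0)) (0\<^sub>m 1 n) (0\<^sub>m n 1) (diag_vec_mat n (\<lambda>k. l (Suc k)))"
  by (rule eq_matI, auto simp: diag_vec_mat_def)

lemma spectral_real:
  fixes M :: "real mat"
  assumes "M \<in> carrier_mat n n" "M\<^sup>T = M" "char_poly M = (\<Prod>k<n. [:- l k, 1:])"
  shows "\<exists>Q. Q \<in> carrier_mat n n \<and> Q\<^sup>T * Q = 1\<^sub>m n \<and> Q * Q\<^sup>T = 1\<^sub>m n \<and> M * Q = Q * diag_vec_mat n l"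
  using assms
proof (induction n arbitrary: M l)
  case 0
  then show ?case by (intro exI[of _ "1\<^sub>m 0"], auto)
next
  case (Suc n M l)
  note M = Suc.prems(1)
  have cp: "char_poly M = [:-l 0,1:] * (\<Prod>k<n. [:-l (Suc k),1:])"
    unfolding Suc.prems(3) by (rule prod.lessThan_Suc_shift)
  have ev: "eigenvalue M (l 0)" unfolding eigenvalue_root_char_poly[OF M] cp by simp
  define v where "v = find_eigenvector M (l 0)"
  from find_eigenvector[OF M ev] have "eigenvector M v (l 0)" unfolding v_def .
  hence v: "v \<in> carrier_vec (Suc n)" and v0: "v \<noteq> 0\<^sub>v (Suc n)" and Mv: "M *\<^sub>v v = l 0 \<cdot>\<^sub>v v"
    unfolding eigenvector_def using M by auto
  interpret cof_vec_space "Suc n" "TYPE(real)" .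
  define b where "b = basis_completion v"
  from basis_completion[OF v v0, folded b_def]
  have dist_b: "distinct b" and indep: "\<not> lin_dep (set b)" and bc: "set b \<subseteq> carrier_vec (Suc n)"
    and len_b: "length b = Suc n" and hdb: "hd b = v"
    by auto
  then obtain vs where bv: "b = v # vs" by (cases b, auto)
  define ws where "ws = gram_schmidt (Suc n) b"
  from gram_schmidt_result[OF bc dist_b indep ws_def]
  have wsc: "set ws \<subseteq> carrier_vec (Suc n)" and orth: "corthogonal ws" and len_ws: "length ws = Suc n"
    using len_b by auto
  have hdws: "hd ws = v" unfolding ws_def bv using gram_schmidt_hd[OF v] by simp
  have ws0: "ws ! 0 = v" using hdws len_ws by (cases ws, auto)
  have wsic: "i < Suc n \<Longrightarrow> ws ! i \<in> carrier_vec (Suc n)" for i using wsc len_ws by auto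
  have wspos: "i < Suc n \<Longrightarrow> ws ! i \<bullet> ws ! i > 0" for i
  proof -
    assume i: "i < Suc n"
    have "ws ! i \<bullet>c ws ! i \<noteq> 0" using corthogonalD[OF orth, of i i] i len_ws by auto
    moreover have "ws ! i \<bullet>c ws ! i \<ge> 0" using conjugate_square_ge_0_vec[of "ws ! i"] by simp
    ultimately show ?thesis by auto
  qed
  have wsorth: "i < Suc n \<Longrightarrow> j < Suc n \<Longrightarrow> i \<noteq> j \<Longrightarrow> ws ! i \<bullet> ws ! j = 0" for i j
    using corthogonalD[OF orth, of i j] len_ws by auto
  define ws' where "ws' = map (\<lambda>w. (1 / sqrt (w \<bullet> w)) \<cdot>\<^sub>v w) ws"
  have len_ws': "length ws' = Suc n" unfolding ws'_def using len_ws by simp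
  have ws'i: "i < Suc n \<Longrightarrow> ws' ! i = (1 / sqrt (ws ! i \<bullet> ws ! i)) \<cdot>\<^sub>v ws ! i" for i
    unfolding ws'_def using len_ws by simp
  have ws'c: "i < Suc n \<Longrightarrow> ws' ! i \<in> carrier_vec (Suc n)" for i
    using ws'i wsic by auto
  have on: "i < Suc n \<Longrightarrow> j < Suc n \<Longrightarrow> ws' ! i \<bullet> ws' ! j = (if i = j then 1 else 0)" for i j
  proof -
    assume i: "i < Suc n" and j: "j < Suc n"
    have "ws' ! i \<bullet> ws' ! j = (1 / sqrt (ws ! i \<bullet> ws ! i)) * (1 / sqrt (ws ! j \<bullet> ws ! j)) * (ws ! i \<bullet> ws ! j)"
      unfolding ws'i[OF i] ws'i[OF j] using wsic[OF i] wsic[OF j] by simp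
    also have "\<dots> = (if i = j then 1 else 0)"
    proof (cases "i = j")
      case True
      have p: "ws ! i \<bullet> ws ! i > 0" using wspos[OF i] .
      then show ?thesis using True
        by (simp add: field_simps real_sqrt_mult[symmetric])
    qed (use wsorth[OF i j] in auto)
    finally show ?thesis .
  qed
  define W where "W = mat_of_cols (Suc n) ws'"
  have W: "W \<in> carrier_mat (Suc n) (Suc n)" unfolding W_def using len_ws' by auto
  have colW: "i < Suc n \<Longrightarrow> col W i = ws' ! i" for i unfolding W_def using ws'c len_ws' by simp
  have WtW: "W\<^sup>T * W = 1\<^sub>m (Suc n)"
    by (rule eq_matI, insert W colW on, auto)
  have WWt: "W * W\<^sup>T = 1\<^sub>m (Suc n)"
    using mat_mult_left_right_inverse[OF _ W WtW] W by auto
  have colW0: "col W 0 = (1 / sqrt (v \<bullet> v)) \<cdot>\<^sub>v v" using colW[of 0] ws'i[of 0] ws0 by simp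
  have MW0: "M *\<^sub>v col W 0 = l 0 \<cdot>\<^sub>v col W 0"
    unfolding colW0 mult_mat_vec[OF M v] Mv by (rule eq_vecI, insert v, auto)
  define A' where "A' = W\<^sup>T * M * W"
  have A'c: "A' \<in> carrier_mat (Suc n) (Suc n)" unfolding A'_def using W M by auto
  have A'ij: "i < Suc n \<Longrightarrow> j < Suc n \<Longrightarrow> A' $$ (i,j) = col W i \<bullet> (M *\<^sub>v col W j)" for i j
  proof -
    assume i: "i < Suc n" and j: "j < Suc n"
    have "A' = W\<^sup>T * (M * W)" unfolding A'_def using W M by (auto intro!: assoc_mult_mat)
    hence "A' $$ (i,j) = row (W\<^sup>T) i \<bullet> col (M * W) j" using i j W M by simp
    also have "row (W\<^sup>T) i = col W i" using i W by simp
    also have "col (M * W) j = M *\<^sub>v col W j" by (rule col_mult2[OF M W j])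
    finally show ?thesis .
  qed
  have A'sym: "A'\<^sup>T = A'"
  proof -
    have "A'\<^sup>T = (W\<^sup>T * (M * W))\<^sup>T" unfolding A'_def using W M by (subst assoc_mult_mat, auto)
    also have "\<dots> = (M * W)\<^sup>T * W\<^sup>T\<^sup>T" by (rule transpose_mult, insert W M, auto)
    also have "\<dots> = (W\<^sup>T * M\<^sup>T) * W" by (subst transpose_mult[of _ _ "Suc n"], insert W M, auto)
    also have "\<dots> = A'" unfolding A'_def Suc.prems(2) ..
    finally show ?thesis .
  qed
  have A'col0: "i < Suc n \<Longrightarrow> A' $$ (i,0) = (if i = 0 then l 0 else 0)" for i
    using A'ij[of i 0] MW0 colW[of i] colW[of 0] on[of i 0] ws'c[of i] ws'c[of 0] by simp
  have A'row0: "j < Suc n \<Longrightarrow> A' $$ (0,j) = (if j = 0 then l 0 else 0)" for j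
  proof -
    assume j: "j < Suc n"
    have "A' $$ (0,j) = A'\<^sup>T $$ (j,0)" using j A'c by simp
    thus ?thesis unfolding A'sym using A'col0[OF j] by simp
  qed
  define A3 where "A3 = mat n n (\<lambda>(i,j). A' $$ (Suc i, Suc j))"
  have A3c: "A3 \<in> carrier_mat n n" unfolding A3_def by simp
  define A1 where "A1 = mat 1 1 (\<lambda>_. l 0)"
  have A1c: "A1 \<in> carrier_mat 1 1" unfolding A1_def by simp
  have A'block: "A' = four_block_mat A1 (0\<^sub>m 1 n) (0\<^sub>m n 1) A3"
  proof (rule eq_matI)
    fix i j assume i: "i < dim_row (four_block_mat A1 (0\<^sub>m 1 n) (0\<^sub>m n 1) A3)"
      and j: "j < dim_col (four_block_mat A1 (0\<^sub>m 1 n) (0\<^sub>m n 1) A3)"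
    hence i: "i < Suc n" and j: "j < Suc n" using A1c A3c by auto
    show "A' $$ (i,j) = four_block_mat A1 (0\<^sub>m 1 n) (0\<^sub>m n 1) A3 $$ (i,j)"
    proof (cases "i = 0")
      case True
      then show ?thesis using A'row0[OF j] A1c A3c j by (auto simp: A1_def)
    next
      case False
      then obtain i' where i': "i = Suc i'" by (cases i, auto)
      show ?thesis
      proof (cases "j = 0")
        case True
        then show ?thesis using A'col0[OF i] A1c A3c i i' by (auto simp: A1_def)
      next
        case False
        then obtain j' where j': "j = Suc j'" by (cases j, auto)
        show ?thesis using A1c A3c i j i' j' by (auto simp: A3_def)
      qed
    qed
  qed (insert A'c A1c A3c, auto)
  have "similar_mat A' M"
    by (rule similar_matI[of _ _ "W\<^sup>T" W "Suc n"], insert A'c M W WtW WWt, auto simp: A'_def)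
  hence "char_poly A' = char_poly M" by (rule char_poly_similar)
  also have "char_poly A' = char_poly A1 * char_poly A3"
    unfolding A'block by (rule char_poly_four_block_zeros_col[OF A1c _ A3c], auto)
  also have "char_poly A1 = [:-l 0, 1:]"
    by (simp add: A1_def char_poly_defs det_def sign_def)
  finally have cp3: "char_poly A3 = (\<Prod>k<n. [:-l (Suc k),1:])"
    unfolding cp by (metis mult_cancel_left pCons_eq_0_iff zero_neq_one)
  have A3sym: "A3\<^sup>T = A3"
  proof (rule eq_matI)
    fix i j assume "i < dim_row A3" "j < dim_col A3"
    hence i: "i < n" and j: "j < n" using A3c by auto
    have "A' $$ (Suc j, Suc i) = A'\<^sup>T $$ (Suc i, Suc j)" using i j A'c by simp
    thus "A3\<^sup>T $$ (i,j) = A3 $$ (i,j)" unfolding A'sym using i j by (simp add: A3_def)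
  qed (insert A3c, auto)
  from Suc.IH[OF A3c A3sym cp3] obtain Q3 where Q3: "Q3 \<in> carrier_mat n n"
    and Q3o: "Q3\<^sup>T * Q3 = 1\<^sub>m n" and A3Q3: "A3 * Q3 = Q3 * diag_vec_mat n (\<lambda>k. l (Suc k))" by auto
  define D3 where "D3 = diag_vec_mat n (\<lambda>k. l (Suc k))"
  have D3c: "D3 \<in> carrier_mat n n" unfolding D3_def by simp
  define F where "F = four_block_mat (1\<^sub>m 1) (0\<^sub>m 1 n) (0\<^sub>m n 1) Q3"
  have Fc: "F \<in> carrier_mat (Suc n) (Suc n)" unfolding F_def using Q3 by auto
  have FtF: "F\<^sup>T * F = 1\<^sub>m (Suc n)"
  proof -
    have FT: "F\<^sup>T = four_block_mat (1\<^sub>m 1) (0\<^sub>m 1 n) (0\<^sub>m n 1) Q3\<^sup>T"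
      unfolding F_def by (subst transpose_four_block_mat, insert Q3, auto)
    have "F\<^sup>T * F = four_block_mat (1\<^sub>m 1) (0\<^sub>m 1 n) (0\<^sub>m n 1) (Q3\<^sup>T * Q3)"
      unfolding FT unfolding F_def by (subst mult_four_block_mat, insert Q3, auto)
    thus ?thesis unfolding Q3o using four_block_one_mat[of 1 n] by simp
  qed
  have Dblock: "diag_vec_mat (Suc n) l = four_block_mat A1 (0\<^sub>m 1 n) (0\<^sub>m n 1) D3"
    unfolding diag_vec_mat_Suc A1_def D3_def ..
  have A'F: "A' * F = F * diag_vec_mat (Suc n) l"
  proof -
    have "A' * F = four_block_mat A1 (0\<^sub>m 1 n) (0\<^sub>m n 1) (A3 * Q3)"
      unfolding A'block F_def by (subst mult_four_block_mat, insert A1c A3c Q3, auto)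
    also have "\<dots> = F * diag_vec_mat (Suc n) l"
      unfolding Dblock F_def A3Q3 D3_def[symmetric]
      by (subst mult_four_block_mat, insert A1c D3c Q3, auto)
    finally show ?thesis .
  qed
  define Q where "Q = W * F"
  have Qc: "Q \<in> carrier_mat (Suc n) (Suc n)" unfolding Q_def using W Fc by auto
  have QtQ: "Q\<^sup>T * Q = 1\<^sub>m (Suc n)"
  proof -
    have "Q\<^sup>T * Q = F\<^sup>T * W\<^sup>T * (W * F)" unfolding Q_def
      by (subst transpose_mult[OF W Fc], simp)
    also have "\<dots> = F\<^sup>T * (W\<^sup>T * (W * F))"
      by (rule assoc_mult_mat, insert W Fc, auto)
    also have "W\<^sup>T * (W * F) = (W\<^sup>T * W) * F"
      by (rule assoc_mult_mat[symmetric], insert W Fc, auto)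
    finally have "Q\<^sup>T * Q = F\<^sup>T * ((W\<^sup>T * W) * F)" .
    thus ?thesis unfolding WtW using Fc FtF by simp
  qed
  have QQt: "Q * Q\<^sup>T = 1\<^sub>m (Suc n)"
    using mat_mult_left_right_inverse[OF _ Qc QtQ] Qc by auto
  have MW: "M * W = W * A'"
  proof -
    have Wt: "W\<^sup>T \<in> carrier_mat (Suc n) (Suc n)" using W by auto
    have "W * A' = (W * W\<^sup>T) * (M * W)" unfolding A'_def
      by (subst assoc_mult_mat[OF Wt M W], subst assoc_mult_mat[OF W Wt, symmetric], insert M W, auto)
    thus ?thesis unfolding WWt using W M by simp
  qed
  have "M * Q = (W * A') * F" unfolding Q_def MW[symmetric] using W M Fc by auto
  also have "\<dots> = W * (F * diag_vec_mat (Suc n) l)" unfolding A'F[symmetric] using W A'c Fc by auto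
  also have "\<dots> = Q * diag_vec_mat (Suc n) l" unfolding Q_def
    by (rule assoc_mult_mat[symmetric], insert W Fc, auto)
  finally show ?case using Qc QtQ QQt by blast
qed

lemma argmax_abs_vec:
  fixes y :: "real vec"
  assumes "n > 0"
  obtains i where "i < n" "\<forall>j<n. \<bar>y $ j\<bar> \<le> \<bar>y $ i\<bar>"
proof -
  let ?M = "Max ((\<lambda>j. \<bar>y $ j\<bar>) ` {..<n})"
  have fin: "finite ((\<lambda>j. \<bar>y $ j\<bar>) ` {..<n})" and ne: "(\<lambda>j. \<bar>y $ j\<bar>) ` {..<n} \<noteq> {}" using assms by auto
  from Max_in[OF fin ne] obtain i where i: "i < n" and Mi: "?M = \<bar>y $ i\<bar>" by auto
  have "\<forall>j<n. \<bar>y $ j\<bar> \<le> \<bar>y $ i\<bar>" using Max_ge[OF fin] Mi by auto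
  with i that show ?thesis by blast
qed

lemma mult_mat_vec_sum: "S \<in> carrier_mat n n \<Longrightarrow> y \<in> carrier_vec n \<Longrightarrow> i < n \<Longrightarrow>
   (S *\<^sub>v y) $ i = (\<Sum>j<n. S $$ (i,j) * y $ j)"
  by (auto simp: scalar_prod_def atLeast0LessThan)

lemma stoch_bound:
  fixes S :: "real mat"
  assumes S: "S \<in> carrier_mat n n" and nn: "\<forall>i<n. \<forall>j<n. S $$ (i,j) \<ge> 0"
   and rs: "\<forall>i<n. (\<Sum>j<n. S $$ (i,j)) = 1"
   and y: "y \<in> carrier_vec n" and ev: "S *\<^sub>v y = \<mu> \<cdot>\<^sub>v y" and y0: "y \<noteq> 0\<^sub>v n"
  shows "\<bar>\<mu>\<bar> \<le> 1"
proof -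
  have n: "n > 0" using y y0 by (cases n, auto)
  obtain i where i: "i < n" and im: "\<forall>j<n. \<bar>y $ j\<bar> \<le> \<bar>y $ i\<bar>" using argmax_abs_vec[OF n] by blast
  have yi: "y $ i \<noteq> 0"
  proof
    assume "y $ i = 0"
    hence "\<forall>j<n. y $ j = 0" using im by auto
    hence "y = 0\<^sub>v n" using y by (intro eq_vecI, auto)
    with y0 show False by simp
  qed
  have "\<mu> * y $ i = (S *\<^sub>v y) $ i" using ev i y by simp
  also have "\<dots> = (\<Sum>j<n. S $$ (i,j) * y $ j)" using mult_mat_vec_sum[OF S y i] .
  finally have eq: "\<bar>\<mu>\<bar> * \<bar>y $ i\<bar> = \<bar>\<Sum>j<n. S $$ (i,j) * y $ j\<bar>" by (simp add: abs_mult[symmetric])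
  also have "\<dots> \<le> (\<Sum>j<n. \<bar>S $$ (i,j) * y $ j\<bar>)" by (rule sum_abs)
  also have "\<dots> \<le> (\<Sum>j<n. S $$ (i,j) * \<bar>y $ i\<bar>)"
    by (rule sum_mono, insert nn i im, auto simp: abs_mult intro: mult_left_mono)
  also have "\<dots> = \<bar>y $ i\<bar>" using rs i by (simp add: sum_distrib_right[symmetric])
  finally show ?thesis using yi by simp
qed

lemma stoch_const:
  fixes S :: "real mat"
  assumes S: "S \<in> carrier_mat n n" and pos: "\<forall>i<n. \<forall>j<n. S $$ (i,j) > 0"
   and rs: "\<forall>i<n. (\<Sum>j<n. S $$ (i,j)) = 1"
   and y: "y \<in> carrier_vec n" and ev: "S *\<^sub>v y = s \<cdot>\<^sub>v y" and s: "\<bar>s\<bar> = 1"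
   and j: "j < n" and k: "k < n"
  shows "y $ j = y $ k"
proof -
  have n: "n > 0" using j by auto
  obtain i where i: "i < n" and im: "\<forall>j<n. \<bar>y $ j\<bar> \<le> \<bar>y $ i\<bar>" using argmax_abs_vec[OF n] by blast
  define M where "M = \<bar>y $ i\<bar>"
  define t where "t = s * y $ i"
  have tM: "\<bar>t\<bar> = M" unfolding t_def M_def using s by (simp add: abs_mult)
  define \<sigma> where "\<sigma> = (if t \<ge> 0 then 1 else (-1::real))"
  have st: "\<sigma> * t = M" using tM unfolding \<sigma>_def by auto
  have sig2: "\<sigma> * \<sigma> = 1" unfolding \<sigma>_def by auto
  have "t = (S *\<^sub>v y) $ i" using ev i y unfolding t_def by simp
  also have "\<dots> = (\<Sum>j<n. S $$ (i,j) * y $ j)" using mult_mat_vec_sum[OF S y i] .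
  finally have "M = (\<Sum>j<n. S $$ (i,j) * (\<sigma> * y $ j))" using st by (simp add: sum_distrib_left ac_simps)
  moreover have "M = (\<Sum>j<n. S $$ (i,j) * M)" using rs i by (simp add: sum_distrib_right[symmetric])
  ultimately have sum0: "(\<Sum>j<n. S $$ (i,j) * (M - \<sigma> * y $ j)) = 0"
    by (simp add: right_diff_distrib sum_subtractf)
  have nonneg: "\<forall>j\<in>{..<n}. S $$ (i,j) * (M - \<sigma> * y $ j) \<ge> 0"
  proof
    fix j assume "j \<in> {..<n}"
    hence j: "j < n" by auto
    have "\<sigma> * y $ j \<le> \<bar>y $ j\<bar>" unfolding \<sigma>_def by auto
    also have "\<dots> \<le> M" using im j M_def by auto
    finally have "M - \<sigma> * y $ j \<ge> 0" by simp
    moreover have "S $$ (i,j) > 0" using pos i j by auto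
    ultimately show "S $$ (i,j) * (M - \<sigma> * y $ j) \<ge> 0" using mult_nonneg_nonneg[of "S $$ (i,j)" "M - \<sigma> * y $ j"] by linarith
  qed
  have z: "\<forall>j\<in>{..<n}. S $$ (i,j) * (M - \<sigma> * y $ j) = 0"
    using sum_nonneg_eq_0_iff[of "{..<n}" "\<lambda>j. S $$ (i,j) * (M - \<sigma> * y $ j)"] nonneg sum0 by simp
  have yj: "y $ j = \<sigma> * M" if j: "j < n" for j
  proof -
    have "S $$ (i,j) * (M - \<sigma> * y $ j) = 0" using z j by blast
    moreover have "S $$ (i,j) \<noteq> 0" using pos i j by force
    ultimately have "M = \<sigma> * y $ j" by simp
    hence "\<sigma> * M = (\<sigma> * \<sigma>) * y $ j" by (simp only: mult.assoc)
    thus ?thesis using sig2 by simp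
  qed
  show ?thesis using yj[OF j] yj[OF k] by simp
qed

lemma diag_mult_left:
  assumes "M \<in> carrier_mat n m" "i < n" "j < m"
  shows "(diag_vec_mat n d * M) $$ (i,j) = d i * M $$ (i,j)"
proof -
  have "(diag_vec_mat n d * M) $$ (i,j) = (\<Sum>l\<in>{0..<n}. (if i = l then d i else 0) * M $$ (l,j))"
    using assms by (simp add: scalar_prod_def diag_vec_mat_def)
  also have "\<dots> = (\<Sum>l\<in>{0..<n}. if l = i then d i * M $$ (l,j) else 0)" by (rule sum.cong, auto)
  also have "\<dots> = d i * M $$ (i,j)" using assms(2) by simp
  finally show ?thesis .
qed

lemma diag_mult_right:
  assumes "M \<in> carrier_mat m n" "i < m" "j < n"
  shows "(M * diag_vec_mat n d) $$ (i,j) = M $$ (i,j) * d j"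
proof -
  have "(M * diag_vec_mat n d) $$ (i,j) = (\<Sum>l\<in>{0..<n}. M $$ (i,l) * (if l = j then d l else 0))"
    using assms by (simp add: scalar_prod_def diag_vec_mat_def)
  also have "\<dots> = (\<Sum>l\<in>{0..<n}. if l = j then M $$ (i,l) * d j else 0)" by (rule sum.cong, auto)
  also have "\<dots> = M $$ (i,j) * d j" using assms(3) by simp
  finally show ?thesis .
qed

lemma diag_mult_diag: "diag_vec_mat n a * diag_vec_mat n b = diag_vec_mat n (\<lambda>i. a i * b i)"
proof (rule eq_matI)
  fix i j assume "i < dim_row (diag_vec_mat n (\<lambda>i. a i * b i))" "j < dim_col (diag_vec_mat n (\<lambda>i. a i * b i))"
  hence i: "i < n" and j: "j < n" by auto
  show "(diag_vec_mat n a * diag_vec_mat n b) $$ (i, j) = diag_vec_mat n (\<lambda>i. a i * b i) $$ (i, j)"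
    by (subst diag_mult_left[of _ n n], insert i j, auto)
qed auto

lemma real_vec_self_zero: "(u :: real vec) \<bullet> u = 0 \<Longrightarrow> u \<in> carrier_vec n \<Longrightarrow> u = 0\<^sub>v n"
proof -
  assume uu: "u \<bullet> u = 0" and u: "u \<in> carrier_vec n"
  have "(\<Sum>i\<in>{0..<n}. u $ i * u $ i) = 0" using uu u by (simp add: scalar_prod_def)
  hence "\<forall>i\<in>{0..<n}. u $ i * u $ i = 0" by (subst sum_nonneg_eq_0_iff[symmetric], auto)
  thus ?thesis using u by (intro eq_vecI, auto)
qed

locale ed =
  fixes N :: nat and A U \<Sigma> :: "real mat" and p :: "real vec" and lam :: "nat \<Rightarrow> real"
  assumes A_carr: "A \<in> carrier_mat N N"
    and prim: "primitive_mat A"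
    and stoch: "A\<^sup>T *\<^sub>v ones_vec N = ones_vec N"
    and p_dim: "p \<in> carrier_vec N"
    and p_fix: "A *\<^sub>v p = p"
    and p_sum: "ones_vec N \<bullet> p = 1"
    and p_pos: "\<forall>i<N. p $ i > 0"
    and balance: "diag_vec_mat N (\<lambda>i. p $ i) * A\<^sup>T = A * diag_vec_mat N (\<lambda>i. p $ i)"
    and U_carr: "U \<in> carrier_mat N N"
    and U_orth: "U * U\<^sup>T = 1\<^sub>m N" "U\<^sup>T * U = 1\<^sub>m N"
    and Sig_carr: "\<Sigma> \<in> carrier_mat N N"
    and Sig_diag: "diagonal_mat \<Sigma>"
    and Sig_nonneg: "\<forall>i<N. \<Sigma> $$ (i,i) \<ge> 0"
    and eig_dec: "(1/2) \<cdot>\<^sub>m (diag_vec_mat N (\<lambda>i. p $ i) - A * diag_vec_mat N (\<lambda>i. p $ i))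
                    = U * \<Sigma> * U\<^sup>T"
    and lam_eigs: "char_poly ((1/2) \<cdot>\<^sub>m (1\<^sub>m N + A)) = (\<Prod>k<N. [:- lam k, 1:])"
    and lam_first: "lam 0 = 1"
begin

definition "P = diag_vec_mat N (\<lambda>i. p $ i)"
definition "Pinv = diag_vec_mat N (\<lambda>i. 1 / p $ i)"
definition "Abar = (1/2) \<cdot>\<^sub>m (1\<^sub>m N + A)"
definition "Dsq = diag_vec_mat N (\<lambda>i. sqrt (\<Sigma> $$ (i,i)))"
definition "V = U * Dsq * U\<^sup>T"
definition "onev = (ones_vec N :: real vec)"

lemma mult_NN[simp]: "X \<in> carrier_mat N N \<Longrightarrow> Y \<in> carrier_mat N N \<Longrightarrow> X * Y \<in> carrier_mat N N"
  by auto
lemma assoc_NN: "(X :: 'a :: semiring_0 mat) \<in> carrier_mat N N \<Longrightarrow> Y \<in> carrier_mat N N \<Longrightarrow> Z \<in> carrier_mat N N \<Longrightarrow> X * Y * Z = X * (Y * Z)"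
  by (rule assoc_mult_mat, auto)
lemma one_mult_NN[simp]: "(X :: 'a :: semiring_1 mat) \<in> carrier_mat N N \<Longrightarrow> 1\<^sub>m N * X = X"
  by (rule left_mult_one_mat)
lemma mult_one_NN[simp]: "(X :: 'a :: semiring_1 mat) \<in> carrier_mat N N \<Longrightarrow> X * 1\<^sub>m N = X"
  by (rule right_mult_one_mat)
lemma UT_carr[simp]: "U\<^sup>T \<in> carrier_mat N N" "U \<in> carrier_mat N N" using U_carr by auto

lemma N_pos: "N > 0"
  using p_sum p_dim by (cases N, auto simp: ones_vec_def scalar_prod_def)

lemma carr[simp]: "P \<in> carrier_mat N N" "Pinv \<in> carrier_mat N N" "Abar \<in> carrier_mat N N"
  "Abar\<^sup>T \<in> carrier_mat N N" "Dsq \<in> carrier_mat N N" "V \<in> carrier_mat N N" "onev \<in> carrier_vec N"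
  "A\<^sup>T \<in> carrier_mat N N"
  using A_carr U_carr by (auto simp: P_def Pinv_def Abar_def Dsq_def V_def onev_def ones_vec_def)

lemma dims[simp]: "dim_row P = N" "dim_col P = N" "dim_row Pinv = N" "dim_col Pinv = N"
  "dim_row Abar = N" "dim_col Abar = N" "dim_row V = N" "dim_col V = N" "dim_row Dsq = N" "dim_col Dsq = N"
  "dim_row A = N" "dim_col A = N" "dim_vec p = N"
  using A_carr U_carr p_dim carrier_matD[OF U_carr] by (auto simp: P_def Pinv_def Abar_def Dsq_def V_def carrier_matD)

lemma mv_NN[simp]: "(X::'a::semiring_0 mat) \<in> carrier_mat N N \<Longrightarrow> v \<in> carrier_vec N \<Longrightarrow> X *\<^sub>v v \<in> carrier_vec N"
  by auto

lemma one_index[simp]: "i < N \<Longrightarrow> onev $ i = 1" "dim_vec onev = N"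
  by (auto simp: onev_def ones_vec_def)

lemma Abar_index: "i < N \<Longrightarrow> j < N \<Longrightarrow> Abar $$ (i,j) = (if i = j then 1/2 else 0) + A $$ (i,j) / 2"
  using A_carr by (simp add: Abar_def)

lemma AbarT_index: "i < N \<Longrightarrow> j < N \<Longrightarrow> Abar\<^sup>T $$ (i,j) = (if i = j then 1/2 else 0) + A $$ (j,i) / 2"
  using A_carr by (auto simp: Abar_def)

lemma balance_index: "i < N \<Longrightarrow> j < N \<Longrightarrow> p $ i * A $$ (j,i) = A $$ (i,j) * p $ j"
proof -
  assume i: "i < N" and j: "j < N"
  have "(diag_vec_mat N (\<lambda>i. p $ i) * A\<^sup>T) $$ (i,j) = (A * diag_vec_mat N (\<lambda>i. p $ i)) $$ (i,j)"
    using balance by simp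
  moreover have "(diag_vec_mat N (\<lambda>i. p $ i) * A\<^sup>T) $$ (i,j) = p $ i * A\<^sup>T $$ (i,j)"
    by (rule diag_mult_left, insert i j A_carr, auto)
  moreover have "(A * diag_vec_mat N (\<lambda>i. p $ i)) $$ (i,j) = A $$ (i,j) * p $ j"
    by (rule diag_mult_right, insert i j A_carr, auto)
  ultimately show ?thesis using i j A_carr by simp
qed

lemma DD: "Dsq * Dsq = \<Sigma>"
proof (rule eq_matI)
  fix a b assume "a < dim_row \<Sigma>" "b < dim_col \<Sigma>"
  hence a: "a < N" and b: "b < N" using Sig_carr by auto
  have "(Dsq * Dsq) $$ (a,b) = (if a = b then sqrt (\<Sigma> $$ (a,a)) * sqrt (\<Sigma> $$ (a,a)) else 0)"
    unfolding Dsq_def diag_mult_diag using a b by simp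
  also have "\<dots> = \<Sigma> $$ (a,b)"
  proof (cases "a = b")
    case True thus ?thesis using Sig_nonneg a by simp
  next
    case False thus ?thesis using Sig_diag a b Sig_carr unfolding diagonal_mat_def by simp
  qed
  finally show "(Dsq * Dsq) $$ (a,b) = \<Sigma> $$ (a,b)" .
qed (insert Sig_carr, auto simp: Dsq_def)

lemma VV: "V * V = (1/2) \<cdot>\<^sub>m (diag_vec_mat N (\<lambda>i. p $ i) - A * diag_vec_mat N (\<lambda>i. p $ i))"
proof -
  have "V * V = U * Dsq * U\<^sup>T * (U * Dsq * U\<^sup>T)" unfolding V_def ..
  also have "\<dots> = U * Dsq * (U\<^sup>T * (U * Dsq * U\<^sup>T))" by (rule assoc_NN, auto)
  also have "U\<^sup>T * (U * Dsq * U\<^sup>T) = (U\<^sup>T * U) * (Dsq * U\<^sup>T)" by (simp add: assoc_NN)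
  also have "\<dots> = Dsq * U\<^sup>T" unfolding U_orth(2) by simp
  also have "U * Dsq * (Dsq * U\<^sup>T) = U * (Dsq * Dsq) * U\<^sup>T" by (simp add: assoc_NN)
  also have "\<dots> = U * \<Sigma> * U\<^sup>T" unfolding DD ..
  finally show ?thesis using eig_dec by simp
qed

lemma VV_index: "i < N \<Longrightarrow> j < N \<Longrightarrow> (V * V) $$ (i,j) = ((if i = j then p $ i else 0) - A $$ (i,j) * p $ j) / 2"
proof -
  assume i: "i < N" and j: "j < N"
  have AP: "(A * diag_vec_mat N (\<lambda>i. p $ i)) $$ (i,j) = A $$ (i,j) * p $ j"
    by (rule diag_mult_right, insert i j A_carr, auto)
  have "(V * V) $$ (i,j) = 1/2 * (diag_vec_mat N (\<lambda>i. p $ i) $$ (i,j) - (A * diag_vec_mat N (\<lambda>i. p $ i)) $$ (i,j))"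
    unfolding VV using i j A_carr by (subst index_smult_mat, auto)
  thus ?thesis unfolding AP using i j by simp
qed

lemma V_sym: "V\<^sup>T = V"
proof -
  have "V\<^sup>T = (U\<^sup>T)\<^sup>T * (U * Dsq)\<^sup>T" unfolding V_def
    by (rule transpose_mult[of _ N N _ N], auto)
  also have "(U * Dsq)\<^sup>T = Dsq\<^sup>T * U\<^sup>T" by (rule transpose_mult[of _ N N _ N], auto)
  also have "Dsq\<^sup>T = Dsq" by (rule eq_matI, auto simp: Dsq_def)
  finally have "V\<^sup>T = U * (Dsq * U\<^sup>T)" by simp
  also have "\<dots> = V" unfolding V_def by (rule assoc_NN[symmetric], auto)
  finally show ?thesis .
qed

lemma Pinv_VV: "Pinv * (V * V) = 1\<^sub>m N - Abar\<^sup>T"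
proof (rule eq_matI)
  fix i j assume "i < dim_row (1\<^sub>m N - Abar\<^sup>T)" "j < dim_col (1\<^sub>m N - Abar\<^sup>T)"
  hence i: "i < N" and j: "j < N" by auto
  have "(Pinv * (V * V)) $$ (i,j) = 1 / p $ i * (V * V) $$ (i,j)"
    unfolding Pinv_def by (rule diag_mult_left, insert i j, auto)
  also have "\<dots> = 1 / p $ i * (((if i = j then p $ i else 0) - A $$ (i,j) * p $ j) / 2)"
    by (simp only: VV_index[OF i j])
  also have "\<dots> = (if i = j then 1 else 0) - ((if i = j then 1/2 else 0) + A $$ (j,i) / 2)"
  proof (cases "i = j")
    case True
    have pi: "p $ i > 0" using p_pos i by auto
    show ?thesis using True pi by (simp add: field_simps)
  next
    case False
    have pi: "p $ i > 0" using p_pos i by auto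
    have b: "A $$ (i,j) * p $ j = p $ i * A $$ (j,i)" using balance_index[OF i j] by simp
    show ?thesis using False pi unfolding b by (simp add: field_simps)
  qed
  also have "\<dots> = (1\<^sub>m N - Abar\<^sup>T) $$ (i,j)" using i j by (simp add: Abar_index)
  finally show "(Pinv * (V * V)) $$ (i,j) = (1\<^sub>m N - Abar\<^sup>T) $$ (i,j)" .
qed auto

lemma AT_one: "i < N \<Longrightarrow> (\<Sum>j<N. A $$ (j,i)) = 1"
proof -
  assume i: "i < N"
  have "(A\<^sup>T *\<^sub>v onev) $ i = 1" using stoch i unfolding onev_def by (simp add: ones_vec_def)
  thus ?thesis using mult_mat_vec_sum[of "A\<^sup>T" N onev i] i A_carr by simp
qed

lemma A_p: "i < N \<Longrightarrow> (\<Sum>j<N. A $$ (i,j) * p $ j) = p $ i"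
  using p_fix mult_mat_vec_sum[OF A_carr p_dim] by (metis)

lemma VV_one: "(V * V) *\<^sub>v onev = 0\<^sub>v N"
proof (rule eq_vecI)
  fix i assume "i < dim_vec (0\<^sub>v N :: real vec)"
  hence i: "i < N" by auto
  have "((V * V) *\<^sub>v onev) $ i = (\<Sum>j<N. (V * V) $$ (i,j))"
    using mult_mat_vec_sum[of "V * V" N onev i] i by simp
  also have "\<dots> = (\<Sum>j<N. ((if i = j then p $ i else 0) - A $$ (i,j) * p $ j) / 2)"
    by (rule sum.cong, insert i VV_index, auto)
  also have "\<dots> = ((\<Sum>j<N. (if i = j then p $ i else 0)) - (\<Sum>j<N. A $$ (i,j) * p $ j)) / 2"
    by (simp add: sum_divide_distrib[symmetric] sum_subtractf)
  also have "\<dots> = 0" using A_p[OF i] i by simp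
  finally show "((V * V) *\<^sub>v onev) $ i = 0\<^sub>v N $ i" using i by simp
qed auto

lemma V_one: "V *\<^sub>v onev = 0\<^sub>v N"
proof -
  define u where "u = V *\<^sub>v onev"
  have u: "u \<in> carrier_vec N" unfolding u_def by simp
  have Vu: "V *\<^sub>v u = 0\<^sub>v N" unfolding u_def
    using VV_one assoc_mult_mat_vec[of V N N V N onev] by simp
  have "u \<bullet> u = (V\<^sup>T *\<^sub>v u) \<bullet> onev" unfolding u_def
    by (rule transpose_vec_mult_scalar[symmetric, of _ N N], auto)
  also have "\<dots> = 0" unfolding V_sym Vu by simp
  finally show ?thesis using real_vec_self_zero u unfolding u_def by auto
qed

lemma one_V: "x \<in> carrier_vec N \<Longrightarrow> onev \<bullet> (V *\<^sub>v x) = 0"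
proof -
  assume x: "x \<in> carrier_vec N"
  have "onev \<bullet> (V *\<^sub>v x) = (V\<^sup>T *\<^sub>v onev) \<bullet> x"
    by (rule transpose_vec_mult_scalar[symmetric, of _ N N], insert x, auto)
  thus ?thesis unfolding V_sym V_one using x by simp
qed

lemma AbarT_one: "Abar\<^sup>T *\<^sub>v onev = onev"
proof (rule eq_vecI)
  fix i assume "i < dim_vec onev"
  hence i: "i < N" by auto
  have "(Abar\<^sup>T *\<^sub>v onev) $ i = (\<Sum>j<N. Abar\<^sup>T $$ (i,j))"
    using mult_mat_vec_sum[of "Abar\<^sup>T" N onev i] i by simp
  also have "\<dots> = (\<Sum>j<N. (if i = j then 1/2 else 0) + A $$ (j,i) / 2)"
    by (rule sum.cong, insert i, auto simp: Abar_index)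
  also have "\<dots> = 1/2 + (\<Sum>j<N. A $$ (j,i)) / 2"
    using i by (simp add: sum.distrib sum_divide_distrib[symmetric])
  finally show "(Abar\<^sup>T *\<^sub>v onev) $ i = onev $ i" using AT_one[OF i] i by simp
qed auto

lemma Abar_p: "Abar *\<^sub>v p = p"
proof (rule eq_vecI)
  fix i assume "i < dim_vec p"
  hence i: "i < N" using p_dim by auto
  have "(Abar *\<^sub>v p) $ i = (\<Sum>j<N. Abar $$ (i,j) * p $ j)"
    using mult_mat_vec_sum[of "Abar" N p i] i p_dim by simp
  also have "\<dots> = (\<Sum>j<N. (if i = j then p $ j / 2 else 0) + A $$ (i,j) * p $ j / 2)"
    by (rule sum.cong, simp, subst Abar_index, insert i, auto simp: algebra_simps)
  also have "\<dots> = p $ i / 2 + (\<Sum>j<N. A $$ (i,j) * p $ j) / 2"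
    using i by (simp add: sum.distrib sum_divide_distrib[symmetric])
  finally show "(Abar *\<^sub>v p) $ i = p $ i" using A_p[OF i] i by simp
qed (insert p_dim, auto)

lemma p_AbarT: "y \<in> carrier_vec N \<Longrightarrow> p \<bullet> (Abar\<^sup>T *\<^sub>v y) = p \<bullet> y"
proof -
  assume y: "y \<in> carrier_vec N"
  have "p \<bullet> (Abar\<^sup>T *\<^sub>v y) = (Abar\<^sup>T *\<^sub>v y) \<bullet> p" by (rule comm_scalar_prod[of _ N], insert y p_dim, auto)
  also have "\<dots> = y \<bullet> (Abar *\<^sub>v p)" by (rule transpose_vec_mult_scalar[of _ N N], insert y p_dim, auto)
  also have "\<dots> = p \<bullet> y" unfolding Abar_p by (rule comm_scalar_prod[of _ N], insert y p_dim, auto)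
  finally show ?thesis .
qed

end

context ed begin

definition "Sh = diag_vec_mat N (\<lambda>i. sqrt (p $ i))"
definition "Shi = diag_vec_mat N (\<lambda>i. 1 / sqrt (p $ i))"
definition "Msym = Sh * Abar\<^sup>T * Shi"

lemma carrS[simp]: "Sh \<in> carrier_mat N N" "Shi \<in> carrier_mat N N" "Msym \<in> carrier_mat N N"
  by (auto simp: Sh_def Shi_def Msym_def)

lemma dimsS[simp]: "dim_row Msym = N" "dim_col Msym = N"
  using carrier_matD[OF carrS(3)] by auto

lemma diag_one: "diag_vec_mat n (\<lambda>_. 1) = 1\<^sub>m n"
  by (rule eq_matI, auto simp: diag_vec_mat_def)

lemma Sh_Shi: "Sh * Shi = 1\<^sub>m N" "Shi * Sh = 1\<^sub>m N"
proof -
  have "diag_vec_mat N (\<lambda>i. sqrt (p $ i) * (1 / sqrt (p $ i))) = diag_vec_mat N (\<lambda>_. 1)"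
    by (rule eq_matI, insert p_pos, auto simp: diag_vec_mat_def)
  thus "Sh * Shi = 1\<^sub>m N" unfolding Sh_def Shi_def diag_mult_diag diag_one .
  have "diag_vec_mat N (\<lambda>i. (1 / sqrt (p $ i)) * sqrt (p $ i)) = diag_vec_mat N (\<lambda>_. 1)"
    by (rule eq_matI, insert p_pos, auto simp: diag_vec_mat_def)
  thus "Shi * Sh = 1\<^sub>m N" unfolding Sh_def Shi_def diag_mult_diag diag_one .
qed

lemma Msym_index: "i < N \<Longrightarrow> j < N \<Longrightarrow> Msym $$ (i,j) = sqrt (p $ i) * Abar\<^sup>T $$ (i,j) * (1 / sqrt (p $ j))"
proof -
  assume i: "i < N" and j: "j < N"
  have "Msym $$ (i,j) = (Sh * Abar\<^sup>T) $$ (i,j) * (1 / sqrt (p $ j))"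
    unfolding Msym_def Shi_def by (rule diag_mult_right, insert i j, auto simp: Sh_def)
  also have "(Sh * Abar\<^sup>T) $$ (i,j) = sqrt (p $ i) * Abar\<^sup>T $$ (i,j)"
    unfolding Sh_def by (rule diag_mult_left, insert i j, auto)
  finally show ?thesis .
qed

lemma Msym_sym: "Msym\<^sup>T = Msym"
proof (rule eq_matI)
  fix i j assume "i < dim_row Msym" "j < dim_col Msym"
  hence i: "i < N" and j: "j < N" using carrS(3) by auto
  have pi: "p $ i > 0" and pj: "p $ j > 0" using p_pos i j by auto
  have b: "p $ i * A $$ (j,i) = A $$ (i,j) * p $ j" by (rule balance_index[OF i j])
  have "Msym $$ (j,i) = Msym $$ (i,j)"
  proof (cases "i = j")
    case False
    have "sqrt (p $ j) * (A $$ (i,j) / 2) * (1 / sqrt (p $ i)) = sqrt (p $ i) * (A $$ (j,i) / 2) * (1 / sqrt (p $ j))"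
    proof -
      have si: "sqrt (p $ i) > 0" and sj: "sqrt (p $ j) > 0" using pi pj by auto
      have e: "sqrt (p $ i) * sqrt (p $ i) = p $ i" "sqrt (p $ j) * sqrt (p $ j) = p $ j" using pi pj by auto
      have "(sqrt (p $ j) * sqrt (p $ j)) * A $$ (i,j) = (sqrt (p $ i) * sqrt (p $ i)) * A $$ (j,i)"
        unfolding e using b by (simp add: mult.commute)
      hence g: "sqrt (p $ j) * (sqrt (p $ j) * A $$ (i,j)) = sqrt (p $ i) * (sqrt (p $ i) * A $$ (j,i))"
        by (simp only: mult.assoc)
      show ?thesis using si sj g by (simp add: field_simps)
    qed
    thus ?thesis using i j False by (simp add: Msym_index Abar_index)
  qed simp
  thus "Msym\<^sup>T $$ (i,j) = Msym $$ (i,j)" using i j by simp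
qed (insert carrS(3), auto)

lemma Msym_cp: "char_poly Msym = (\<Prod>k<N. [:- lam k, 1:])"
proof -
  have "similar_mat Msym (Abar\<^sup>T)"
    by (rule similar_matI[of _ _ Sh Shi N], insert Sh_Shi, auto simp: Msym_def)
  hence "char_poly Msym = char_poly (Abar\<^sup>T)" by (rule char_poly_similar)
  also have "\<dots> = char_poly Abar" by (rule char_poly_transpose_mat[OF carr(3)])
  finally show ?thesis using lam_eigs unfolding Abar_def by simp
qed

lemma exists_Y: "\<exists>Y Yi. Y \<in> carrier_mat N N \<and> Yi \<in> carrier_mat N N \<and> Y * Yi = 1\<^sub>m N \<and> Yi * Y = 1\<^sub>m N
   \<and> Abar\<^sup>T * Y = Y * diag_vec_mat N lam"
proof -
  from spectral_real[OF carrS(3) Msym_sym Msym_cp] obtain Q where Q: "Q \<in> carrier_mat N N"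
    and QtQ: "Q\<^sup>T * Q = 1\<^sub>m N" and QQt: "Q * Q\<^sup>T = 1\<^sub>m N" and MQ: "Msym * Q = Q * diag_vec_mat N lam"
    by auto
  have Qt: "Q\<^sup>T \<in> carrier_mat N N" using Q by auto
  define Y where "Y = Shi * Q"
  define Yi where "Yi = Q\<^sup>T * Sh"
  have Y: "Y \<in> carrier_mat N N" "Yi \<in> carrier_mat N N" unfolding Y_def Yi_def using Q by auto
  have "Y * Yi = Shi * ((Q * Q\<^sup>T) * Sh)" unfolding Y_def Yi_def using Q Qt by (simp add: assoc_NN)
  hence YYi: "Y * Yi = 1\<^sub>m N" unfolding QQt using Sh_Shi by simp
  have "Yi * Y = Q\<^sup>T * ((Sh * Shi) * Q)" unfolding Y_def Yi_def using Q Qt by (simp add: assoc_NN)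
  hence YiY: "Yi * Y = 1\<^sub>m N" unfolding Sh_Shi using QtQ Q by simp
  have AS: "Abar\<^sup>T * Shi = Shi * Msym"
  proof -
    have "Shi * Msym = (Shi * Sh) * (Abar\<^sup>T * Shi)" unfolding Msym_def by (simp add: assoc_NN)
    thus ?thesis unfolding Sh_Shi by simp
  qed
  have "Abar\<^sup>T * Y = (Abar\<^sup>T * Shi) * Q" unfolding Y_def using Q by (simp add: assoc_NN)
  also have "\<dots> = Shi * (Msym * Q)" unfolding AS using Q by (simp add: assoc_NN)
  also have "\<dots> = Y * diag_vec_mat N lam" unfolding MQ Y_def using Q by (simp add: assoc_NN)
  finally show ?thesis using Y YYi YiY by blast
qed

end

context ed begin

lemma AT_eig: assumes y: "y \<in> carrier_vec N" and ev: "Abar\<^sup>T *\<^sub>v y = \<mu> \<cdot>\<^sub>v y"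
  shows "A\<^sup>T *\<^sub>v y = (2 * \<mu> - 1) \<cdot>\<^sub>v y"
proof (rule eq_vecI)
  fix i assume "i < dim_vec ((2 * \<mu> - 1) \<cdot>\<^sub>v y)"
  hence i: "i < N" using y by auto
  have "\<mu> * y $ i = (Abar\<^sup>T *\<^sub>v y) $ i" using ev i y by simp
  also have "\<dots> = (\<Sum>j<N. Abar\<^sup>T $$ (i,j) * y $ j)" using mult_mat_vec_sum[OF carr(4) y i] .
  also have "\<dots> = (\<Sum>j<N. (if i = j then y $ j / 2 else 0) + A $$ (j,i) * y $ j / 2)"
    by (rule sum.cong, insert i, auto simp: Abar_index algebra_simps)
  also have "\<dots> = y $ i / 2 + (\<Sum>j<N. A\<^sup>T $$ (i,j) * y $ j) / 2"
    using i by (simp add: sum.distrib sum_divide_distrib[symmetric])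
  also have "(\<Sum>j<N. A\<^sup>T $$ (i,j) * y $ j) = (A\<^sup>T *\<^sub>v y) $ i" using mult_mat_vec_sum[OF carr(8) y i] by simp
  finally show "(A\<^sup>T *\<^sub>v y) $ i = ((2 * \<mu> - 1) \<cdot>\<^sub>v y) $ i" using i y by (simp add: algebra_simps)
qed (insert y, auto)

lemma Apow_eig: assumes y: "y \<in> carrier_vec N" and ev: "A\<^sup>T *\<^sub>v y = \<mu> \<cdot>\<^sub>v y"
  shows "(A ^\<^sub>m m)\<^sup>T *\<^sub>v y = \<mu> ^ m \<cdot>\<^sub>v y"
proof (induction m)
  case 0
  then show ?case using y A_carr by simp
next
  case (Suc m)
  have Am: "A ^\<^sub>m m \<in> carrier_mat N N" using A_carr by simp
  have "(A ^\<^sub>m Suc m)\<^sup>T = A\<^sup>T * (A ^\<^sub>m m)\<^sup>T" using transpose_mult[OF Am A_carr] by simp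
  have Amt: "(A ^\<^sub>m m)\<^sup>T \<in> carrier_mat N N" using Am by simp
  have "(A ^\<^sub>m Suc m)\<^sup>T *\<^sub>v y = A\<^sup>T *\<^sub>v ((A ^\<^sub>m m)\<^sup>T *\<^sub>v y)"
    unfolding \<open>(A ^\<^sub>m Suc m)\<^sup>T = A\<^sup>T * (A ^\<^sub>m m)\<^sup>T\<close> by (rule assoc_mult_mat_vec[OF carr(8) Amt y])
  also have "\<dots> = \<mu> ^ m \<cdot>\<^sub>v (A\<^sup>T *\<^sub>v y)" unfolding Suc.IH by (rule mult_mat_vec[OF carr(8) y])
  also have "\<dots> = \<mu> ^ Suc m \<cdot>\<^sub>v y" unfolding ev by (simp add: smult_smult_assoc mult.commute)
  finally show ?case .
qed

lemma AT_stoch: "A\<^sup>T *\<^sub>v onev = 1 \<cdot>\<^sub>v onev" using stoch unfolding onev_def by simp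

lemma const_eig: assumes y: "y \<in> carrier_vec N" and ev: "A\<^sup>T *\<^sub>v y = \<mu> \<cdot>\<^sub>v y" and mu: "\<bar>\<mu>\<bar> = 1"
  shows "y = y $ 0 \<cdot>\<^sub>v onev"
proof -
  from prim obtain m where pos: "\<forall>i<N. \<forall>j<N. (A ^\<^sub>m m) $$ (i,j) > 0"
    unfolding primitive_mat_def using A_carr by auto
  define S where "S = (A ^\<^sub>m m)\<^sup>T"
  have S: "S \<in> carrier_mat N N" unfolding S_def using A_carr by simp
  have Spos: "\<forall>i<N. \<forall>j<N. S $$ (i,j) > 0" unfolding S_def using pos A_carr by simp
  have rs: "\<forall>i<N. (\<Sum>j<N. S $$ (i,j)) = 1"
  proof (intro allI impI)
    fix i assume i: "i < N"
    have "S *\<^sub>v onev = onev" unfolding S_def using Apow_eig[OF carr(7) AT_stoch, of m] by simp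
    hence "(S *\<^sub>v onev) $ i = 1" using i by simp
    thus "(\<Sum>j<N. S $$ (i,j)) = 1" using mult_mat_vec_sum[OF S carr(7) i] i by simp
  qed
  have Sy: "S *\<^sub>v y = \<mu> ^ m \<cdot>\<^sub>v y" unfolding S_def by (rule Apow_eig[OF y ev])
  have mum: "\<bar>\<mu> ^ m\<bar> = 1" using mu by (simp add: power_abs)
  show ?thesis
  proof (rule eq_vecI)
    fix i assume "i < dim_vec (y $ 0 \<cdot>\<^sub>v onev)"
    hence i: "i < N" by simp
    show "y $ i = (y $ 0 \<cdot>\<^sub>v onev) $ i"
      using stoch_const[OF S Spos rs y Sy mum i, of 0] i N_pos by simp
  qed (insert y, auto)
qed

end

locale ed2 = ed +
  fixes Y Yi :: "real mat"
  assumes Y_carr: "Y \<in> carrier_mat N N" and Yi_carr: "Yi \<in> carrier_mat N N"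
    and YYi: "Y * Yi = 1\<^sub>m N" and YiY: "Yi * Y = 1\<^sub>m N"
    and AY: "Abar\<^sup>T * Y = Y * diag_vec_mat N lam"
begin

definition "yv k = col Y k"

lemma yv_carr[simp]: "yv k \<in> carrier_vec N" unfolding yv_def using Y_carr by auto
lemma yv_dim[simp]: "dim_vec (yv k) = N" unfolding yv_def using Y_carr by auto
lemma Yi_dims[simp]: "dim_row Yi = N" "dim_col Yi = N" "dim_row Y = N" "dim_col Y = N"
  using Yi_carr Y_carr by auto

lemma yv_eig: assumes k: "k < N" shows "Abar\<^sup>T *\<^sub>v yv k = lam k \<cdot>\<^sub>v yv k"
proof -
  have "Abar\<^sup>T *\<^sub>v yv k = col (Abar\<^sup>T * Y) k" unfolding yv_def using col_mult2[OF carr(4) Y_carr k] by simp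
  also have "\<dots> = col (Y * diag_vec_mat N lam) k" unfolding AY ..
  also have "\<dots> = lam k \<cdot>\<^sub>v yv k"
  proof (rule eq_vecI)
    fix i assume "i < dim_vec (lam k \<cdot>\<^sub>v yv k)"
    hence i: "i < N" by simp
    have "(Y * diag_vec_mat N lam) $$ (i,k) = Y $$ (i,k) * lam k" by (rule diag_mult_right[OF Y_carr i k])
    thus "col (Y * diag_vec_mat N lam) k $ i = (lam k \<cdot>\<^sub>v yv k) $ i" using i k Y_carr
      unfolding yv_def by simp
  qed (insert Y_carr, auto)
  finally show ?thesis .
qed

lemma Yi_yv: "l < N \<Longrightarrow> k < N \<Longrightarrow> row Yi l \<bullet> yv k = (if l = k then 1 else 0)"
proof -
  assume l: "l < N" and k: "k < N"
  have "(Yi * Y) $$ (l,k) = row Yi l \<bullet> yv k" unfolding yv_def using l k Y_carr Yi_carr by simp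
  thus ?thesis unfolding YiY using l k by simp
qed

lemma yv_nz: "k < N \<Longrightarrow> yv k \<noteq> 0\<^sub>v N"
proof
  assume k: "k < N" and z: "yv k = 0\<^sub>v N"
  have "row Yi k \<bullet> yv k = 0" unfolding z using Yi_carr k by simp
  with Yi_yv[OF k k] show False by simp
qed

definition "c0 = yv 0 $ 0"

lemma y0_const: "yv 0 = c0 \<cdot>\<^sub>v onev" "c0 \<noteq> 0"
proof -
  have "A\<^sup>T *\<^sub>v yv 0 = (2 * lam 0 - 1) \<cdot>\<^sub>v yv 0" using AT_eig[OF yv_carr yv_eig[OF N_pos]] .
  hence e: "A\<^sup>T *\<^sub>v yv 0 = 1 \<cdot>\<^sub>v yv 0" using lam_first by simp
  show y0: "yv 0 = c0 \<cdot>\<^sub>v onev" unfolding c0_def using const_eig[OF yv_carr e] by simp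
  show "c0 \<noteq> 0"
  proof
    assume "c0 = 0"
    hence "yv 0 = 0\<^sub>v N" unfolding y0 by (intro eq_vecI, auto)
    with yv_nz[OF N_pos] show False by simp
  qed
qed

lemma lam_bounds: assumes k1: "1 \<le> k" and k: "k < N" shows "0 < lam k" "lam k < 1"
proof -
  have e: "A\<^sup>T *\<^sub>v yv k = (2 * lam k - 1) \<cdot>\<^sub>v yv k" using AT_eig[OF yv_carr yv_eig[OF k]] .
  have nn: "\<forall>i<N. \<forall>j<N. A\<^sup>T $$ (i,j) \<ge> 0" using prim A_carr unfolding primitive_mat_def by auto
  have rs: "\<forall>i<N. (\<Sum>j<N. A\<^sup>T $$ (i,j)) = 1" using AT_one A_carr by simp
  have b: "\<bar>2 * lam k - 1\<bar> \<le> 1" by (rule stoch_bound[OF carr(8) nn rs yv_carr e yv_nz[OF k]])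
  show "lam k < 1"
  proof (rule ccontr)
    assume "\<not> lam k < 1"
    hence l1: "lam k = 1" using b by auto
    hence e1: "A\<^sup>T *\<^sub>v yv k = 1 \<cdot>\<^sub>v yv k" using e by simp
    have yk: "yv k = (yv k $ 0) \<cdot>\<^sub>v onev" using const_eig[OF yv_carr e1] by simp
    have yk': "yv k = (yv k $ 0 / c0) \<cdot>\<^sub>v yv 0" unfolding y0_const(1) using y0_const(2) yk
      by (simp add: smult_smult_assoc)
    have "row Yi k \<bullet> yv k = (yv k $ 0 / c0) * (row Yi k \<bullet> yv 0)"
      by (subst yk', rule scalar_prod_smult_right, simp)
    also have "row Yi k \<bullet> yv 0 = 0" using Yi_yv[OF k N_pos] k1 by simp
    finally show False using Yi_yv[OF k k] by simp
  qed
  show "0 < lam k"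
  proof (rule ccontr)
    assume "\<not> 0 < lam k"
    hence l0: "lam k = 0" using b by auto
    hence e1: "A\<^sup>T *\<^sub>v yv k = (-1) \<cdot>\<^sub>v yv k" using e by simp
    have yk: "yv k = (yv k $ 0) \<cdot>\<^sub>v onev" using const_eig[OF yv_carr e1] by simp
    have "A\<^sup>T *\<^sub>v yv k = (yv k $ 0) \<cdot>\<^sub>v onev"
      by (subst yk, subst mult_mat_vec[OF carr(8) carr(7)], unfold AT_stoch, simp)
    hence yy: "yv k = (-1) \<cdot>\<^sub>v yv k" using e1 yk by simp
    have "yv k = 0\<^sub>v N"
    proof (rule eq_vecI)
      fix i assume "i < dim_vec (0\<^sub>v N :: real vec)"
      hence i: "i < N" by simp
      have "yv k $ i = ((-1) \<cdot>\<^sub>v yv k) $ i" using yy by simp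
      hence "yv k $ i = - yv k $ i" using i by simp
      thus "yv k $ i = 0\<^sub>v N $ i" using i by simp
    qed simp
    with yv_nz[OF k] show False by simp
  qed
qed

lemma p_yv: assumes k1: "1 \<le> k" and k: "k < N" shows "p \<bullet> yv k = 0"
proof -
  have "p \<bullet> yv k = p \<bullet> (Abar\<^sup>T *\<^sub>v yv k)" using p_AbarT[OF yv_carr] by simp
  also have "\<dots> = lam k * (p \<bullet> yv k)" unfolding yv_eig[OF k] using p_dim by simp
  finally have "(1 - lam k) * (p \<bullet> yv k) = 0" by (simp add: algebra_simps)
  thus ?thesis using lam_bounds[OF k1 k] by simp
qed

end

lemma mv_zero: "(M :: 'a :: semiring_0 mat) \<in> carrier_mat n m \<Longrightarrow> M *\<^sub>v 0\<^sub>v m = 0\<^sub>v n"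
  by (intro eq_vecI, auto)

context ed2 begin

definition "Bm = four_block_mat (Abar\<^sup>T) (- (Pinv * V)) (V * Abar\<^sup>T) (1\<^sub>m N - V * Pinv * V)"

lemma Bm_carr: "Bm \<in> carrier_mat (N + N) (N + N)"
  unfolding Bm_def by (rule four_block_carrier_mat, auto)

lemma PVV: "y \<in> carrier_vec N \<Longrightarrow> (Pinv * V) *\<^sub>v (V *\<^sub>v y) = y - Abar\<^sup>T *\<^sub>v y"
proof -
  assume y: "y \<in> carrier_vec N"
  have "(Pinv * V) *\<^sub>v (V *\<^sub>v y) = ((Pinv * V) * V) *\<^sub>v y"
    by (rule assoc_mult_mat_vec[symmetric, of _ N N _ N], insert y, auto)
  also have "(Pinv * V) * V = Pinv * (V * V)" by (rule assoc_NN, auto)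
  also have "\<dots> = 1\<^sub>m N - Abar\<^sup>T" by (rule Pinv_VV)
  also have "(1\<^sub>m N - Abar\<^sup>T) *\<^sub>v y = y - Abar\<^sup>T *\<^sub>v y"
    by (subst minus_mult_distrib_mat_vec[of _ N N], insert y, auto)
  finally show ?thesis .
qed

lemma Bm_e1: assumes k: "k < N"
  shows "Bm *\<^sub>v (yv k @\<^sub>v 0\<^sub>v N) = (lam k \<cdot>\<^sub>v yv k) @\<^sub>v (lam k \<cdot>\<^sub>v (V *\<^sub>v yv k))"
proof -
  have "Bm *\<^sub>v (yv k @\<^sub>v 0\<^sub>v N) = (Abar\<^sup>T *\<^sub>v yv k + (- (Pinv * V)) *\<^sub>v 0\<^sub>v N) @\<^sub>v
      ((V * Abar\<^sup>T) *\<^sub>v yv k + (1\<^sub>m N - V * Pinv * V) *\<^sub>v 0\<^sub>v N)"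
    unfolding Bm_def by (rule four_block_mat_mult_vec, auto)
  also have "(- (Pinv * V)) *\<^sub>v 0\<^sub>v N = 0\<^sub>v N" by (rule mv_zero, auto)
  also have "(1\<^sub>m N - V * Pinv * V) *\<^sub>v 0\<^sub>v N = 0\<^sub>v N" by (rule mv_zero, auto)
  also have "(V * Abar\<^sup>T) *\<^sub>v yv k = V *\<^sub>v (Abar\<^sup>T *\<^sub>v yv k)" by (rule assoc_mult_mat_vec[of _ N N _ N], auto)
  also have "V *\<^sub>v (Abar\<^sup>T *\<^sub>v yv k) = lam k \<cdot>\<^sub>v (V *\<^sub>v yv k)" unfolding yv_eig[OF k]
    by (rule mult_mat_vec[of _ N N], auto)
  finally show ?thesis unfolding yv_eig[OF k] by simp
qed

lemma Bm_e2: assumes k: "k < N"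
  shows "Bm *\<^sub>v (0\<^sub>v N @\<^sub>v (V *\<^sub>v yv k)) = ((lam k - 1) \<cdot>\<^sub>v yv k) @\<^sub>v (lam k \<cdot>\<^sub>v (V *\<^sub>v yv k))"
proof -
  let ?y = "yv k"
  have "Bm *\<^sub>v (0\<^sub>v N @\<^sub>v (V *\<^sub>v ?y)) = (Abar\<^sup>T *\<^sub>v 0\<^sub>v N + (- (Pinv * V)) *\<^sub>v (V *\<^sub>v ?y)) @\<^sub>v
      ((V * Abar\<^sup>T) *\<^sub>v 0\<^sub>v N + (1\<^sub>m N - V * Pinv * V) *\<^sub>v (V *\<^sub>v ?y))"
    unfolding Bm_def by (rule four_block_mat_mult_vec, auto)
  also have "Abar\<^sup>T *\<^sub>v 0\<^sub>v N = 0\<^sub>v N" by (rule mv_zero, auto)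
  also have "(V * Abar\<^sup>T) *\<^sub>v 0\<^sub>v N = 0\<^sub>v N" by (rule mv_zero, auto)
  also have "(- (Pinv * V)) *\<^sub>v (V *\<^sub>v ?y) = - (?y - lam k \<cdot>\<^sub>v ?y)"
    using PVV[OF yv_carr] yv_eig[OF k] by simp
  also have "(1\<^sub>m N - V * Pinv * V) *\<^sub>v (V *\<^sub>v ?y) = V *\<^sub>v ?y - (V * Pinv * V) *\<^sub>v (V *\<^sub>v ?y)"
    by (subst minus_mult_distrib_mat_vec[of _ N N], auto)
  also have "(V * Pinv * V) *\<^sub>v (V *\<^sub>v ?y) = V *\<^sub>v ((Pinv * V) *\<^sub>v (V *\<^sub>v ?y))"
  proof -
    have "V * Pinv * V = V * (Pinv * V)" by (rule assoc_NN, auto)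
    show ?thesis unfolding \<open>V * Pinv * V = V * (Pinv * V)\<close> by (rule assoc_mult_mat_vec[of _ N N _ N], auto)
  qed
  also have "\<dots> = V *\<^sub>v ?y - lam k \<cdot>\<^sub>v (V *\<^sub>v ?y)"
    unfolding PVV[OF yv_carr] yv_eig[OF k]
    by (subst mult_minus_distrib_mat_vec[of _ N N], auto simp: mult_mat_vec[of _ N N])
  finally have "Bm *\<^sub>v (0\<^sub>v N @\<^sub>v (V *\<^sub>v ?y)) = (0\<^sub>v N + - (?y - lam k \<cdot>\<^sub>v ?y)) @\<^sub>v
      (0\<^sub>v N + (V *\<^sub>v ?y - (V *\<^sub>v ?y - lam k \<cdot>\<^sub>v (V *\<^sub>v ?y))))" .
  also have "\<dots> = ((lam k - 1) \<cdot>\<^sub>v yv k) @\<^sub>v (lam k \<cdot>\<^sub>v (V *\<^sub>v yv k))"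
    by (intro arg_cong2[where f = append_vec] eq_vecI, auto simp: algebra_simps)
  finally show ?thesis .
qed

lemma Bm_c0: "Bm *\<^sub>v (onev @\<^sub>v 0\<^sub>v N) = onev @\<^sub>v 0\<^sub>v N"
proof -
  have "Bm *\<^sub>v (onev @\<^sub>v 0\<^sub>v N) = (Abar\<^sup>T *\<^sub>v onev + (- (Pinv * V)) *\<^sub>v 0\<^sub>v N) @\<^sub>v
      ((V * Abar\<^sup>T) *\<^sub>v onev + (1\<^sub>m N - V * Pinv * V) *\<^sub>v 0\<^sub>v N)"
    unfolding Bm_def by (rule four_block_mat_mult_vec, auto)
  also have "(- (Pinv * V)) *\<^sub>v 0\<^sub>v N = 0\<^sub>v N" by (rule mv_zero, auto)
  also have "(1\<^sub>m N - V * Pinv * V) *\<^sub>v 0\<^sub>v N = 0\<^sub>v N" by (rule mv_zero, auto)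
  also have "(V * Abar\<^sup>T) *\<^sub>v onev = V *\<^sub>v (Abar\<^sup>T *\<^sub>v onev)" by (rule assoc_mult_mat_vec[of _ N N _ N], auto)
  finally show ?thesis unfolding AbarT_one V_one by simp
qed

lemma Bm_c1: "Bm *\<^sub>v (0\<^sub>v N @\<^sub>v onev) = 0\<^sub>v N @\<^sub>v onev"
proof -
  have "Bm *\<^sub>v (0\<^sub>v N @\<^sub>v onev) = (Abar\<^sup>T *\<^sub>v 0\<^sub>v N + (- (Pinv * V)) *\<^sub>v onev) @\<^sub>v
      ((V * Abar\<^sup>T) *\<^sub>v 0\<^sub>v N + (1\<^sub>m N - V * Pinv * V) *\<^sub>v onev)"
    unfolding Bm_def by (rule four_block_mat_mult_vec, auto)
  also have "Abar\<^sup>T *\<^sub>v 0\<^sub>v N = 0\<^sub>v N" by (rule mv_zero, auto)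
  also have "(V * Abar\<^sup>T) *\<^sub>v 0\<^sub>v N = 0\<^sub>v N" by (rule mv_zero, auto)
  also have "(- (Pinv * V)) *\<^sub>v onev = 0\<^sub>v N"
  proof -
    have "(Pinv * V) *\<^sub>v onev = Pinv *\<^sub>v (V *\<^sub>v onev)" by (rule assoc_mult_mat_vec[of _ N N _ N], auto)
    thus ?thesis unfolding V_one by (simp add: mv_zero[of _ N N])
  qed
  also have "(1\<^sub>m N - V * Pinv * V) *\<^sub>v onev = onev"
  proof -
    have "(V * Pinv * V) *\<^sub>v onev = (V * Pinv) *\<^sub>v (V *\<^sub>v onev)" by (rule assoc_mult_mat_vec[of _ N N _ N], auto)
    hence "(V * Pinv * V) *\<^sub>v onev = 0\<^sub>v N" unfolding V_one by (simp add: mv_zero[of _ N N])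
    thus ?thesis by (subst minus_mult_distrib_mat_vec[of _ N N], auto)
  qed
  finally show ?thesis by simp
qed

end

context ed2 begin

definition "rr k = sqrt (lam k / (1 - lam k))"
definition "ss k = sqrt (lam k * (1 - lam k))"
definition "wq j = (if even j then Complex 0 (- rr (j div 2)) else Complex 0 (rr (j div 2)))"
definition "zq j = (if even j then Complex (lam (j div 2)) (ss (j div 2)) else Complex (lam (j div 2)) (- ss (j div 2)))"
definition "dfull j = (if j < 2 then (1::complex) else zq j)"
definition "e1 k = yv k @\<^sub>v 0\<^sub>v N"
definition "e2 k = 0\<^sub>v N @\<^sub>v (V *\<^sub>v yv k)"
definition "Xm = mat (2*N) (2*N) (\<lambda>(i,j). if j = 0 then (if i < N then 1 else 0) else if j = 1 then (if i < N then 0 else 1)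
   else complex_of_real (e1 (j div 2) $ i) + wq j * complex_of_real (e2 (j div 2) $ i))"
definition "Bc = map_mat complex_of_real Bm"

lemma NN2: "N + N = 2 * N" by simp

lemma Bc_carr: "Bc \<in> carrier_mat (2*N) (2*N)" unfolding Bc_def using Bm_carr by (simp add: NN2)
lemma Xm_carr: "Xm \<in> carrier_mat (2*N) (2*N)" unfolding Xm_def by simp
lemma e_carr: "e1 k \<in> carrier_vec (2*N)" "e2 k \<in> carrier_vec (2*N)"
  unfolding e1_def e2_def NN2[symmetric] by auto
lemma e_dim[simp]: "dim_vec (e1 k) = 2*N" "dim_vec (e2 k) = 2*N"
  using e_carr by auto

lemma rr_ss: assumes "1 \<le> k" "k < N"
  shows "rr k * (1 - lam k) = ss k" "ss k * rr k = lam k" "rr k > 0"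
proof -
  have l0: "0 < lam k" and l1: "lam k < 1" using lam_bounds[OF assms] by auto
  have "1 - lam k = sqrt ((1 - lam k) * (1 - lam k))" using l1 by simp
  hence "rr k * (1 - lam k) = sqrt (lam k / (1 - lam k) * ((1 - lam k) * (1 - lam k)))"
    unfolding rr_def by (metis real_sqrt_mult)
  also have "lam k / (1 - lam k) * ((1 - lam k) * (1 - lam k)) = lam k * (1 - lam k)" using l1 by (simp add: field_simps)
  finally show "rr k * (1 - lam k) = ss k" unfolding ss_def .
  have "ss k * rr k = sqrt (lam k * (1 - lam k) * (lam k / (1 - lam k)))"
    unfolding rr_def ss_def by (metis real_sqrt_mult)
  also have "lam k * (1 - lam k) * (lam k / (1 - lam k)) = lam k * lam k" using l1 by (simp add: field_simps)
  finally show "ss k * rr k = lam k" using l0 by simp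
  show "rr k > 0" unfolding rr_def using l0 l1 by simp
qed

lemma zw: assumes "2 \<le> j" "j < 2 * N"
  shows "complex_of_real (lam (j div 2)) + wq j * complex_of_real (lam (j div 2) - 1) = zq j"
    "complex_of_real (lam (j div 2)) + wq j * complex_of_real (lam (j div 2)) = zq j * wq j"
proof -
  let ?k = "j div 2"
  have k: "1 \<le> ?k" "?k < N" using assms by auto
  note r = rr_ss[OF k]
  have r1: "rr ?k * (lam ?k - 1) = - ss ?k" using r(1) by (simp add: algebra_simps)
  have r2: "rr ?k * ss ?k = lam ?k" using r(2) by (simp add: algebra_simps)
  show "complex_of_real (lam ?k) + wq j * complex_of_real (lam ?k - 1) = zq j"
    unfolding wq_def zq_def using r1 by (auto simp: complex_eq_iff algebra_simps)
  show "complex_of_real (lam ?k) + wq j * complex_of_real (lam ?k) = zq j * wq j"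
    unfolding wq_def zq_def using r2 by (auto simp: complex_eq_iff algebra_simps)
qed

lemma colX: assumes j: "2 \<le> j" "j < 2 * N"
  shows "col Xm j = map_vec complex_of_real (e1 (j div 2)) + wq j \<cdot>\<^sub>v map_vec complex_of_real (e2 (j div 2))"
  by (rule eq_vecI, insert j e_carr, auto simp: Xm_def)

lemma colX0: "col Xm 0 = map_vec complex_of_real (onev @\<^sub>v 0\<^sub>v N)"
  using N_pos by (intro eq_vecI, auto simp: Xm_def)

lemma colX1: "col Xm 1 = map_vec complex_of_real (0\<^sub>v N @\<^sub>v onev)"
  using N_pos by (intro eq_vecI, auto simp: Xm_def)

lemma Bc_hom: "v \<in> carrier_vec (2*N) \<Longrightarrow> Bc *\<^sub>v map_vec complex_of_real v = map_vec complex_of_real (Bm *\<^sub>v v)"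
  unfolding Bc_def by (rule of_real_hom.mult_mat_vec_hom[symmetric, OF Bm_carr], simp add: NN2)

lemma col_eig: assumes j: "j < 2 * N"
  shows "Bc *\<^sub>v col Xm j = dfull j \<cdot>\<^sub>v col Xm j"
proof -
  consider "j = 0" | "j = 1" | "2 \<le> j" by linarith
  thus ?thesis
  proof cases
    case 1
    have c: "onev @\<^sub>v 0\<^sub>v N \<in> carrier_vec (2*N)" by (simp add: NN2[symmetric])
    show ?thesis unfolding 1 colX0 Bc_hom[OF c] Bm_c0 by (simp add: dfull_def)
  next
    case 2
    have c: "0\<^sub>v N @\<^sub>v onev \<in> carrier_vec (2*N)" by (simp add: NN2[symmetric])
    show ?thesis unfolding 2 colX1 Bc_hom[OF c] Bm_c1 by (simp add: dfull_def)
  next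
    case 3
    let ?k = "j div 2"
    have k: "?k < N" using j by auto
    let ?a = "map_vec complex_of_real (e1 ?k)" and ?b = "map_vec complex_of_real (e2 ?k)"
    have ab: "?a \<in> carrier_vec (2*N)" "?b \<in> carrier_vec (2*N)" using e_carr by auto
    have "Bc *\<^sub>v col Xm j = Bc *\<^sub>v ?a + wq j \<cdot>\<^sub>v (Bc *\<^sub>v ?b)"
      unfolding colX[OF 3 j]
      by (subst mult_add_distrib_mat_vec[OF Bc_carr ab(1)], insert ab, simp,
          subst mult_mat_vec[OF Bc_carr ab(2)], simp)
    also have "\<dots> = dfull j \<cdot>\<^sub>v col Xm j"
    proof (rule eq_vecI)
      fix i assume "i < dim_vec (dfull j \<cdot>\<^sub>v col Xm j)"
      hence i: "i < 2 * N" using Xm_carr by simp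
      have Ba: "Bc *\<^sub>v ?a = map_vec complex_of_real (Bm *\<^sub>v e1 ?k)" by (rule Bc_hom[OF e_carr(1)])
      have Bb: "Bc *\<^sub>v ?b = map_vec complex_of_real (Bm *\<^sub>v e2 ?k)" by (rule Bc_hom[OF e_carr(2)])
      have dz: "dfull j = zq j" using 3 by (simp add: dfull_def)
      note z = zw[OF 3 j]
      show "(Bc *\<^sub>v ?a + wq j \<cdot>\<^sub>v (Bc *\<^sub>v ?b)) $ i = (dfull j \<cdot>\<^sub>v col Xm j) $ i"
      proof (cases "i < N")
        case True
        have "(Bc *\<^sub>v ?a + wq j \<cdot>\<^sub>v (Bc *\<^sub>v ?b)) $ i
            = complex_of_real (lam ?k * yv ?k $ i) + wq j * complex_of_real ((lam ?k - 1) * yv ?k $ i)"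
          unfolding Ba Bb unfolding e1_def e2_def Bm_e1[OF k] Bm_e2[OF k] using True i by simp
        also have "\<dots> = (complex_of_real (lam ?k) + wq j * complex_of_real (lam ?k - 1)) * complex_of_real (yv ?k $ i)"
          by (simp add: algebra_simps)
        also have "\<dots> = (dfull j \<cdot>\<^sub>v col Xm j) $ i"
          unfolding z(1) dz colX[OF 3 j] using True i by (simp add: e1_def e2_def)
        finally show ?thesis .
      next
        case False
        have "(Bc *\<^sub>v ?a + wq j \<cdot>\<^sub>v (Bc *\<^sub>v ?b)) $ i
            = complex_of_real (lam ?k * (V *\<^sub>v yv ?k) $ (i - N)) + wq j * complex_of_real (lam ?k * (V *\<^sub>v yv ?k) $ (i - N))"
          unfolding Ba Bb unfolding e1_def e2_def Bm_e1[OF k] Bm_e2[OF k] using False i by simp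
        also have "\<dots> = (complex_of_real (lam ?k) + wq j * complex_of_real (lam ?k)) * complex_of_real ((V *\<^sub>v yv ?k) $ (i - N))"
          by (simp add: algebra_simps)
        also have "\<dots> = (dfull j \<cdot>\<^sub>v col Xm j) $ i"
          unfolding z(2) dz colX[OF 3 j] using False i by (simp add: e1_def e2_def)
        finally show ?thesis .
      qed
    qed (insert Xm_carr Bc_carr, auto)
    finally show ?thesis .
  qed
qed

end

lemma sum_split2: fixes N :: nat assumes "1 \<le> N"
  shows "(\<Sum>j<2*N. f j) = f 0 + f 1 + (\<Sum>k\<in>{1..<N}. f (2*k) + f (2*k+1))"
  using assms
proof (induction N rule: nat_induct_at_least)
  case base
  then show ?case by (simp add: numeral_2_eq_2)
next
  case (Suc n)
  have "(\<Sum>j<2 * Suc n. f j) = (\<Sum>j<2*n. f j) + f (2*n) + f (2*n+1)" by simp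
  also have "{1..<Suc n} = insert n {1..<n}" using Suc by auto
  ultimately show ?case using Suc by (simp add: ac_simps)
qed

lemma sum_split1: fixes N :: nat assumes "1 \<le> N" shows "(\<Sum>k<N. f k) = f 0 + (\<Sum>k\<in>{1..<N}. f k)"
proof -
  have "{..<N} = insert 0 {1..<N}" using assms by auto
  thus ?thesis by simp
qed

lemma of_real_scalar: assumes "dim_vec u = dim_vec v"
  shows "map_vec complex_of_real u \<bullet> map_vec complex_of_real v = complex_of_real (u \<bullet> v)"
  using assms by (auto simp: scalar_prod_def intro!: sum.cong)

context ed2 begin

lemma Xm_top: "i < N \<Longrightarrow> 1 \<le> k \<Longrightarrow> k < N \<Longrightarrow>
  Xm $$ (i, 2*k) = complex_of_real (yv k $ i) \<and> Xm $$ (i, 2*k+1) = complex_of_real (yv k $ i)"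
  by (simp add: Xm_def e1_def e2_def)

lemma Xm_bot: "i < N \<Longrightarrow> 1 \<le> k \<Longrightarrow> k < N \<Longrightarrow>
  Xm $$ (N+i, 2*k) = wq (2*k) * complex_of_real ((V *\<^sub>v yv k) $ i) \<and>
  Xm $$ (N+i, 2*k+1) = wq (2*k+1) * complex_of_real ((V *\<^sub>v yv k) $ i)"
  by (simp add: Xm_def e1_def e2_def)

lemma Xm_01: "i < N \<Longrightarrow> Xm $$ (i,0) = 1 \<and> Xm $$ (i,1) = 0 \<and> Xm $$ (N+i,0) = 0 \<and> Xm $$ (N+i,1) = 1"
  using N_pos by (simp add: Xm_def)

lemma VY_index: "i < N \<Longrightarrow> k < N \<Longrightarrow> (V * Y) $$ (i,k) = (V *\<^sub>v yv k) $ i"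
  unfolding yv_def using Y_carr by simp

lemma YPVVY: "Yi * Pinv * V * (V * Y) = 1\<^sub>m N - diag_vec_mat N lam"
proof -
  have "Yi * Pinv * V * (V * Y) = Yi * ((Pinv * (V * V)) * Y)"
    using Yi_carr Y_carr by (simp add: assoc_NN)
  also have "\<dots> = Yi * ((1\<^sub>m N - Abar\<^sup>T) * Y)" unfolding Pinv_VV ..
  also have "(1\<^sub>m N - Abar\<^sup>T) * Y = Y - Abar\<^sup>T * Y" using Y_carr
    by (subst minus_mult_distrib_mat[of _ N N], auto)
  also have "Yi * (Y - Abar\<^sup>T * Y) = Yi * Y - Yi * (Abar\<^sup>T * Y)" using Y_carr Yi_carr
    by (subst mult_minus_distrib_mat[of _ N N], auto)
  also have "Yi * (Abar\<^sup>T * Y) = (Yi * Y) * diag_vec_mat N lam" unfolding AY using Y_carr Yi_carr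
    by (simp add: assoc_NN)
  finally show ?thesis unfolding YiY by simp
qed

lemma X_inj: assumes c: "c \<in> carrier_vec (2*N)" and Xc: "Xm *\<^sub>v c = 0\<^sub>v (2*N)"
  shows "c = 0\<^sub>v (2*N)"
proof -
  have N1: "1 \<le> N" using N_pos by simp
  have ent: "i < 2*N \<Longrightarrow> (\<Sum>j<2*N. Xm $$ (i,j) * c $ j) = 0" for i
    using mult_mat_vec_sum[OF Xm_carr c, of i] Xc by simp
  have top: "c $ 0 + (\<Sum>k\<in>{1..<N}. complex_of_real (yv k $ i) * (c $ (2*k) + c $ (2*k+1))) = 0" if i: "i < N" for i
  proof -
    have "0 = (\<Sum>j<2*N. Xm $$ (i,j) * c $ j)" using ent[of i] i by simp
    also have "\<dots> = Xm $$ (i,0) * c $ 0 + Xm $$ (i,1) * c $ 1 +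
       (\<Sum>k\<in>{1..<N}. Xm $$ (i,2*k) * c $ (2*k) + Xm $$ (i,2*k+1) * c $ (2*k+1))"
      by (rule sum_split2[OF N1])
    also have "(\<Sum>k\<in>{1..<N}. Xm $$ (i,2*k) * c $ (2*k) + Xm $$ (i,2*k+1) * c $ (2*k+1))
        = (\<Sum>k\<in>{1..<N}. complex_of_real (yv k $ i) * (c $ (2*k) + c $ (2*k+1)))"
    proof (rule sum.cong[OF refl])
      fix k assume "k \<in> {1..<N}"
      hence k: "1 \<le> k" "k < N" by auto
      show "Xm $$ (i,2*k) * c $ (2*k) + Xm $$ (i,2*k+1) * c $ (2*k+1)
        = complex_of_real (yv k $ i) * (c $ (2*k) + c $ (2*k+1))"
        using Xm_top[OF i k] by (simp add: distrib_left)
    qed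
    also have "Xm $$ (i,0) * c $ 0 + Xm $$ (i,1) * c $ 1 = c $ 0" using Xm_01[OF i] by simp
    finally show ?thesis by simp
  qed
  define a where "a = vec N (\<lambda>k. if k = 0 then c $ 0 / complex_of_real c0 else c $ (2*k) + c $ (2*k+1))"
  let ?Yc = "map_mat complex_of_real Y" and ?Yic = "map_mat complex_of_real Yi"
  have Yca: "?Yc *\<^sub>v a = 0\<^sub>v N"
  proof (rule eq_vecI)
    fix i assume "i < dim_vec (0\<^sub>v N :: complex vec)"
    hence i: "i < N" by simp
    have "(?Yc *\<^sub>v a) $ i = (\<Sum>k<N. ?Yc $$ (i,k) * a $ k)"
      by (rule mult_mat_vec_sum, insert Y_carr i, auto simp: a_def)
    also have "\<dots> = ?Yc $$ (i,0) * a $ 0 + (\<Sum>k\<in>{1..<N}. ?Yc $$ (i,k) * a $ k)" by (rule sum_split1[OF N1])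
    also have "\<dots> = c $ 0 + (\<Sum>k\<in>{1..<N}. complex_of_real (yv k $ i) * (c $ (2*k) + c $ (2*k+1)))"
    proof -
      have "Y $$ (i,0) = yv 0 $ i" unfolding yv_def using i N_pos Y_carr by simp
      also have "\<dots> = c0" unfolding y0_const(1) using i by simp
      finally have "?Yc $$ (i,0) = complex_of_real c0" using i N_pos Y_carr by simp
      moreover have "a $ 0 = c $ 0 / complex_of_real c0" using N_pos by (simp add: a_def)
      ultimately have "?Yc $$ (i,0) * a $ 0 = c $ 0" using y0_const(2) by simp
      moreover have "(\<Sum>k\<in>{1..<N}. ?Yc $$ (i,k) * a $ k) = (\<Sum>k\<in>{1..<N}. complex_of_real (yv k $ i) * (c $ (2*k) + c $ (2*k+1)))"
        by (rule sum.cong, insert i Y_carr, auto simp: a_def yv_def)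
      ultimately show ?thesis by simp
    qed
    also have "\<dots> = 0" by (rule top[OF i])
    finally show "(?Yc *\<^sub>v a) $ i = 0\<^sub>v N $ i" using i by simp
  qed (insert Y_carr, auto)
  have a0: "a = 0\<^sub>v N"
  proof -
    have h1: "map_mat complex_of_real (Yi * Y) = ?Yic * ?Yc" by (rule of_real_hom.mat_hom_mult[OF Yi_carr Y_carr])
    have h2: "map_mat complex_of_real (1\<^sub>m N) = (1\<^sub>m N :: complex mat)" by (rule eq_matI, auto)
    have "?Yic * ?Yc = 1\<^sub>m N" using h1 h2 unfolding YiY by simp
    hence "a = (?Yic * ?Yc) *\<^sub>v a" by (simp add: a_def)
    also have "\<dots> = ?Yic *\<^sub>v (?Yc *\<^sub>v a)" by (rule assoc_mult_mat_vec[of _ N N _ N], insert Yi_carr Y_carr, auto simp: a_def)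
    also have "\<dots> = 0\<^sub>v N" unfolding Yca by (rule mv_zero, insert Yi_carr, auto)
    finally show ?thesis .
  qed
  have c0z: "c $ 0 = 0"
  proof -
    have "a $ 0 = 0" using a0 N_pos by simp
    thus ?thesis using N_pos y0_const(2) by (simp add: a_def)
  qed
  have codd: "c $ (2*k+1) = - c $ (2*k)" if k: "1 \<le> k" "k < N" for k
  proof -
    have "a $ k = 0" using a0 k by simp
    thus ?thesis using k by (simp add: a_def add_eq_0_iff)
  qed
  define b where "b = vec N (\<lambda>k. if k = 0 then 0 else wq (2*k) * c $ (2*k) + wq (2*k+1) * c $ (2*k+1))"
  let ?VYc = "map_mat complex_of_real (V * Y)"
  have VYc: "?VYc \<in> carrier_mat N N" using Y_carr by simp
  have bc: "b \<in> carrier_vec N" unfolding b_def by simp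
  have bot: "c $ 1 + (?VYc *\<^sub>v b) $ i = 0" if i: "i < N" for i
  proof -
    have "0 = (\<Sum>j<2*N. Xm $$ (N+i,j) * c $ j)" using ent[of "N+i"] i by simp
    also have "\<dots> = Xm $$ (N+i,0) * c $ 0 + Xm $$ (N+i,1) * c $ 1 +
       (\<Sum>k\<in>{1..<N}. Xm $$ (N+i,2*k) * c $ (2*k) + Xm $$ (N+i,2*k+1) * c $ (2*k+1))"
      by (rule sum_split2[OF N1])
    also have "(\<Sum>k\<in>{1..<N}. Xm $$ (N+i,2*k) * c $ (2*k) + Xm $$ (N+i,2*k+1) * c $ (2*k+1))
        = (\<Sum>k\<in>{1..<N}. complex_of_real ((V *\<^sub>v yv k) $ i) * b $ k)"
    proof (rule sum.cong[OF refl])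
      fix k assume "k \<in> {1..<N}"
      hence k: "1 \<le> k" "k < N" by auto
      show "Xm $$ (N+i,2*k) * c $ (2*k) + Xm $$ (N+i,2*k+1) * c $ (2*k+1)
        = complex_of_real ((V *\<^sub>v yv k) $ i) * b $ k"
        using Xm_bot[OF i k] k by (simp add: b_def algebra_simps)
    qed
    also have "Xm $$ (N+i,0) * c $ 0 + Xm $$ (N+i,1) * c $ 1 = c $ 1" using Xm_01[OF i] by simp
    also have "(\<Sum>k\<in>{1..<N}. complex_of_real ((V *\<^sub>v yv k) $ i) * b $ k) = (?VYc *\<^sub>v b) $ i"
    proof -
      have "(?VYc *\<^sub>v b) $ i = (\<Sum>k<N. ?VYc $$ (i,k) * b $ k)" by (rule mult_mat_vec_sum[OF VYc bc i])
      also have "\<dots> = ?VYc $$ (i,0) * b $ 0 + (\<Sum>k\<in>{1..<N}. ?VYc $$ (i,k) * b $ k)" by (rule sum_split1[OF N1])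
      also have "\<dots> = (\<Sum>k\<in>{1..<N}. complex_of_real ((V *\<^sub>v yv k) $ i) * b $ k)"
      proof -
        have "?VYc $$ (i,0) * b $ 0 = 0" using N_pos by (simp add: b_def)
        moreover have "(\<Sum>k\<in>{1..<N}. ?VYc $$ (i,k) * b $ k) = (\<Sum>k\<in>{1..<N}. complex_of_real ((V *\<^sub>v yv k) $ i) * b $ k)"
        proof (rule sum.cong[OF refl])
          fix k assume "k \<in> {1..<N}"
          hence k: "k < N" by auto
          show "?VYc $$ (i,k) * b $ k = complex_of_real ((V *\<^sub>v yv k) $ i) * b $ k"
            using VY_index[OF i k] i k Y_carr by simp
        qed
        ultimately show ?thesis by simp
      qed
      finally show ?thesis by simp
    qed
    finally show ?thesis by simp
  qed
  have colsum: "(\<Sum>i<N. (?VYc *\<^sub>v b) $ i) = 0"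
  proof -
    have "(\<Sum>i<N. (?VYc *\<^sub>v b) $ i) = (\<Sum>i<N. \<Sum>k<N. complex_of_real ((V *\<^sub>v yv k) $ i) * b $ k)"
    proof (rule sum.cong[OF refl])
      fix i assume "i \<in> {..<N}"
      hence i: "i < N" by simp
      have "(?VYc *\<^sub>v b) $ i = (\<Sum>k<N. ?VYc $$ (i,k) * b $ k)" by (rule mult_mat_vec_sum[OF VYc bc i])
      also have "\<dots> = (\<Sum>k<N. complex_of_real ((V *\<^sub>v yv k) $ i) * b $ k)"
      proof (rule sum.cong[OF refl])
        fix k assume "k \<in> {..<N}"
        hence k: "k < N" by simp
        show "?VYc $$ (i,k) * b $ k = complex_of_real ((V *\<^sub>v yv k) $ i) * b $ k"
          using VY_index[OF i k] i k Y_carr by simp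
      qed
      finally show "(?VYc *\<^sub>v b) $ i = (\<Sum>k<N. complex_of_real ((V *\<^sub>v yv k) $ i) * b $ k)" .
    qed
    also have "\<dots> = (\<Sum>k<N. \<Sum>i<N. complex_of_real ((V *\<^sub>v yv k) $ i) * b $ k)"
      by (rule sum.swap)
    also have "\<dots> = (\<Sum>k<N. 0)"
    proof (rule sum.cong[OF refl])
      fix k assume "k \<in> {..<N}"
      have "(\<Sum>i<N. (V *\<^sub>v yv k) $ i) = onev \<bullet> (V *\<^sub>v yv k)"
        by (simp add: scalar_prod_def atLeast0LessThan)
      also have "\<dots> = 0" by (rule one_V[OF yv_carr])
      finally have z: "(\<Sum>i<N. (V *\<^sub>v yv k) $ i) = 0" .
      have "(\<Sum>i<N. complex_of_real ((V *\<^sub>v yv k) $ i) * b $ k) = complex_of_real (\<Sum>i<N. (V *\<^sub>v yv k) $ i) * b $ k"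
        by (simp only: sum_distrib_right of_real_sum)
      thus "(\<Sum>i<N. complex_of_real ((V *\<^sub>v yv k) $ i) * b $ k) = 0" unfolding z by simp
    qed
    finally show ?thesis by simp
  qed
  have c1z: "c $ 1 = 0"
  proof -
    have "(\<Sum>i<N. c $ 1 + (?VYc *\<^sub>v b) $ i) = 0" using bot by simp
    hence "of_nat N * c $ 1 + (\<Sum>i<N. (?VYc *\<^sub>v b) $ i) = 0" by (simp add: sum.distrib)
    thus ?thesis using colsum N_pos by simp
  qed
  have VYb: "?VYc *\<^sub>v b = 0\<^sub>v N"
    by (rule eq_vecI, insert bot c1z Y_carr, auto)
  let ?M = "map_mat complex_of_real (Yi * Pinv * V)"
  have Mc: "?M \<in> carrier_mat N N" using Yi_carr by simp
  have "?M * ?VYc = map_mat complex_of_real (1\<^sub>m N - diag_vec_mat N lam)"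
    unfolding YPVVY[symmetric] by (rule of_real_hom.mat_hom_mult[symmetric, of _ N N _ N], insert Yi_carr Y_carr, auto)
  hence Mb: "map_mat complex_of_real (1\<^sub>m N - diag_vec_mat N lam) *\<^sub>v b = 0\<^sub>v N"
  proof -
    assume MV: "?M * ?VYc = map_mat complex_of_real (1\<^sub>m N - diag_vec_mat N lam)"
    have "(?M * ?VYc) *\<^sub>v b = ?M *\<^sub>v (?VYc *\<^sub>v b)" by (rule assoc_mult_mat_vec[OF Mc VYc bc])
    also have "\<dots> = 0\<^sub>v N" unfolding VYb by (rule mv_zero[OF Mc])
    finally show ?thesis unfolding MV .
  qed
  have Dix: "k < N \<Longrightarrow> l < N \<Longrightarrow> map_mat complex_of_real (1\<^sub>m N - diag_vec_mat N lam) $$ (k,l)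
     = (if l = k then complex_of_real (1 - lam k) else 0)" for k l
    by simp
  have b0: "b $ k = 0" if k: "1 \<le> k" "k < N" for k
  proof -
    have Dc: "map_mat complex_of_real (1\<^sub>m N - diag_vec_mat N lam) \<in> carrier_mat N N" by (rule carrier_matI, simp_all)
    have "(map_mat complex_of_real (1\<^sub>m N - diag_vec_mat N lam) *\<^sub>v b) $ k =
       (\<Sum>l<N. map_mat complex_of_real (1\<^sub>m N - diag_vec_mat N lam) $$ (k,l) * b $ l)"
      by (rule mult_mat_vec_sum[OF Dc bc k(2)])
    also have "\<dots> = (\<Sum>l<N. if l = k then complex_of_real (1 - lam k) * b $ k else 0)"
    proof (rule sum.cong[OF refl])
      fix l assume "l \<in> {..<N}"
      hence l: "l < N" by simp
      show "map_mat complex_of_real (1\<^sub>m N - diag_vec_mat N lam) $$ (k,l) * b $ l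
        = (if l = k then complex_of_real (1 - lam k) * b $ k else 0)"
        unfolding Dix[OF k(2) l] by simp
    qed
    also have "\<dots> = complex_of_real (1 - lam k) * b $ k" using k by simp
    finally have eq: "(map_mat complex_of_real (1\<^sub>m N - diag_vec_mat N lam) *\<^sub>v b) $ k = complex_of_real (1 - lam k) * b $ k" .
    have "(map_mat complex_of_real (1\<^sub>m N - diag_vec_mat N lam) *\<^sub>v b) $ k = 0" unfolding Mb using k by simp
    hence "complex_of_real (1 - lam k) * b $ k = 0" unfolding eq .
    moreover have "1 - lam k \<noteq> 0" using lam_bounds[OF k] by simp
    ultimately show ?thesis by simp
  qed
  have ceven: "c $ (2*k) = 0" if k: "1 \<le> k" "k < N" for k
  proof -
    have "wq (2*k) * c $ (2*k) + wq (2*k+1) * c $ (2*k+1) = 0" using b0[OF k] k by (simp add: b_def)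
    hence "(wq (2*k) - wq (2*k+1)) * c $ (2*k) = 0" unfolding codd[OF k] by (simp add: algebra_simps)
    moreover have "wq (2*k) - wq (2*k+1) \<noteq> 0"
    proof
      assume a: "wq (2*k) - wq (2*k+1) = 0"
      have "wq (2*k) = Complex 0 (- rr k)" unfolding wq_def by simp
      moreover have "wq (2*k+1) = Complex 0 (rr k)" unfolding wq_def by simp
      ultimately have "Complex 0 (- rr k) = Complex 0 (rr k)" using a by simp
      hence "rr k = 0" by simp
      thus False using rr_ss[OF k] by simp
    qed
    ultimately show ?thesis by simp
  qed
  show ?thesis
  proof (rule eq_vecI)
    fix j assume "j < dim_vec (0\<^sub>v (2*N) :: complex vec)"
    hence j: "j < 2*N" by simp
    consider "j = 0" | "j = 1" | "2 \<le> j" by linarith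
    hence "c $ j = 0"
    proof cases
      case 3
      define k where "k = j div 2"
      have k: "1 \<le> k" "k < N" using 3 j unfolding k_def by auto
      have "j = 2*k \<or> j = 2*k+1" unfolding k_def by auto
      thus ?thesis using ceven[OF k] codd[OF k] by auto
    qed (insert c0z c1z, auto)
    thus "c $ j = 0\<^sub>v (2*N) $ j" using j by simp
  qed (insert c, auto)
qed

end

context ed2 begin

lemma X_inv: "\<exists>Xi. Xi \<in> carrier_mat (2*N) (2*N) \<and> Xm * Xi = 1\<^sub>m (2*N) \<and> Xi * Xm = 1\<^sub>m (2*N)"
proof -
  have "det Xm \<noteq> 0"
  proof
    assume "det Xm = 0"
    from this[unfolded det_0_iff_vec_prod_zero[OF Xm_carr]] obtain v where
      v: "v \<in> carrier_vec (2*N)" "v \<noteq> 0\<^sub>v (2*N)" "Xm *\<^sub>v v = 0\<^sub>v (2*N)" by auto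
    from X_inj[OF v(1) v(3)] v(2) show False by simp
  qed
  from det_non_zero_imp_unit[OF Xm_carr this, of undefined]
  obtain Q where "Q \<in> carrier_mat (2*N) (2*N)" "Q * Xm = 1\<^sub>m (2*N)" "Xm * Q = 1\<^sub>m (2*N)"
    unfolding Units_def ring_mat_def by auto
  thus ?thesis by blast
qed

definition "D1 = diag_vec_mat (2*N-2) (\<lambda>m. zq (m+2))"
definition "DDm = four_block_mat (1\<^sub>m 2) (0\<^sub>m 2 (2*N-2)) (0\<^sub>m (2*N-2) 2) D1"

lemma DDm_eq: "DDm = diag_vec_mat (2*N) dfull"
proof -
  have n2: "2 + (2*N-2) = 2*N" using N_pos by simp
  show ?thesis
  proof (rule eq_matI)
    fix i j assume "i < dim_row (diag_vec_mat (2*N) dfull)" "j < dim_col (diag_vec_mat (2*N) dfull)"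
    hence i: "i < 2*N" and j: "j < 2*N" by auto
    show "DDm $$ (i,j) = diag_vec_mat (2*N) dfull $$ (i,j)"
    proof -
      have ss: "\<And>j. \<not> j < 2 \<Longrightarrow> Suc (Suc (j - 2)) = j" by arith
      show ?thesis unfolding DDm_def D1_def using i j n2 ss by (auto simp: dfull_def)
    qed
  qed (insert N_pos, auto simp: DDm_def D1_def)
qed

lemma BX: "Bc * Xm = Xm * DDm"
proof (rule eq_matI)
  fix i j assume "i < dim_row (Xm * DDm)" "j < dim_col (Xm * DDm)"
  hence i: "i < 2*N" and j: "j < 2*N" using Xm_carr unfolding DDm_eq by auto
  have "(Bc * Xm) $$ (i,j) = (Bc *\<^sub>v col Xm j) $ i" using i j Bc_carr Xm_carr by simp
  also have "\<dots> = dfull j * Xm $$ (i,j)" unfolding col_eig[OF j] using i j Xm_carr by simp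
  also have "\<dots> = (Xm * DDm) $$ (i,j)" unfolding DDm_eq
    by (subst diag_mult_right[OF Xm_carr i j], simp)
  finally show "(Bc * Xm) $$ (i,j) = (Xm * DDm) $$ (i,j)" .
qed (insert Bc_carr Xm_carr, auto simp: DDm_eq)

lemma B_decomp: assumes Xi: "Xi \<in> carrier_mat (2*N) (2*N)" "Xm * Xi = 1\<^sub>m (2*N)"
  shows "Bc = Xm * DDm * Xi"
proof -
  have DD: "DDm \<in> carrier_mat (2*N) (2*N)" unfolding DDm_eq by simp
  have "Bc = Bc * (Xm * Xi)" unfolding Xi(2) using Bc_carr by simp
  also have "\<dots> = (Bc * Xm) * Xi" by (rule assoc_mult_mat[symmetric, OF Bc_carr Xm_carr Xi(1)])
  also have "\<dots> = Xm * DDm * Xi" unfolding BX ..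
  finally show ?thesis .
qed

definition "Lm = mat 2 (2*N) (\<lambda>(i,j). if i = 0 then (if j < N then complex_of_real (p $ j) else 0)
   else (if j < N then 0 else 1 / of_nat N))"
definition "Em = mat 2 (2*N) (\<lambda>(i,j). if i = j then (1::complex) else 0)"

lemma rowL0: "row Lm 0 = map_vec complex_of_real (p @\<^sub>v 0\<^sub>v N)"
  by (rule eq_vecI, insert p_dim, auto simp: Lm_def)

lemma rowL1: "row Lm 1 = map_vec complex_of_real (0\<^sub>v N @\<^sub>v ((1 / real N) \<cdot>\<^sub>v onev))"
  by (rule eq_vecI, insert p_dim, auto simp: Lm_def)

lemma LX: "Lm * Xm = Em"
proof (rule eq_matI)
  fix i j assume "i < dim_row Em" "j < dim_col Em"
  hence i: "i < 2" and j: "j < 2*N" by (auto simp: Em_def)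
  have l0: "p @\<^sub>v 0\<^sub>v N \<in> carrier_vec (2*N)" using p_dim by (simp add: NN2[symmetric])
  have l1: "0\<^sub>v N @\<^sub>v ((1 / real N) \<cdot>\<^sub>v onev) \<in> carrier_vec (2*N)" by (simp add: NN2[symmetric])
  define l where "l = (if i = 0 then p @\<^sub>v 0\<^sub>v N else 0\<^sub>v N @\<^sub>v ((1 / real N) \<cdot>\<^sub>v onev))"
  have lc: "l \<in> carrier_vec (2*N)" unfolding l_def using l0 l1 by auto
  have i01: "i = 0 \<or> i = 1" using i by auto
  have rowL: "row Lm i = map_vec complex_of_real l" unfolding l_def using i01 rowL0 rowL1 by auto
  have "(Lm * Xm) $$ (i,j) = row Lm i \<bullet> col Xm j" using i j Xm_carr by (simp add: Lm_def)
  also have "\<dots> = Em $$ (i,j)"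
  proof -
    have pone: "p \<bullet> onev = 1" using p_sum comm_scalar_prod[OF p_dim carr(7)] by (simp add: onev_def)
    have oo: "onev \<bullet> onev = real N" by (simp add: scalar_prod_def)
    have Nr: "real N \<noteq> 0" using N_pos by simp
    consider "j = 0" | "j = 1" | "2 \<le> j" by linarith
    thus ?thesis
    proof cases
      case 1
      have x1: "(p @\<^sub>v 0\<^sub>v N) \<bullet> (onev @\<^sub>v 0\<^sub>v N) = 1"
        by (subst scalar_prod_append[of _ N _ N], insert p_dim pone, auto)
      have x2: "(0\<^sub>v N @\<^sub>v ((1 / real N) \<cdot>\<^sub>v onev)) \<bullet> (onev @\<^sub>v 0\<^sub>v N) = 0"
        by (subst scalar_prod_append[of _ N _ N], auto)
      have "l \<bullet> (onev @\<^sub>v 0\<^sub>v N) = (if i = 0 then 1 else 0)" unfolding l_def using x1 x2 by auto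
      thus ?thesis unfolding rowL 1 colX0 using of_real_scalar[of l "onev @\<^sub>v 0\<^sub>v N"] lc i N_pos
        by (auto simp: Em_def)
    next
      case 2
      have x1: "(p @\<^sub>v 0\<^sub>v N) \<bullet> (0\<^sub>v N @\<^sub>v onev) = 0"
        by (subst scalar_prod_append[of _ N _ N], insert p_dim, auto)
      have x2: "(0\<^sub>v N @\<^sub>v ((1 / real N) \<cdot>\<^sub>v onev)) \<bullet> (0\<^sub>v N @\<^sub>v onev) = 1"
        by (subst scalar_prod_append[of _ N _ N], insert oo Nr, auto)
      have "l \<bullet> (0\<^sub>v N @\<^sub>v onev) = (if i = 0 then 0 else 1)" unfolding l_def using x1 x2 by auto
      thus ?thesis unfolding rowL 2 colX1 using of_real_scalar[of l "0\<^sub>v N @\<^sub>v onev"] lc i N_pos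
        by (auto simp: Em_def)
    next
      case 3
      let ?k = "j div 2"
      have k: "1 \<le> ?k" "?k < N" using 3 j by auto
      have a1: "(p @\<^sub>v 0\<^sub>v N) \<bullet> e1 ?k = 0" unfolding e1_def
        by (subst scalar_prod_append[of _ N _ N], insert p_dim p_yv[OF k], auto)
      have a2: "(0\<^sub>v N @\<^sub>v ((1 / real N) \<cdot>\<^sub>v onev)) \<bullet> e1 ?k = 0" unfolding e1_def
        by (subst scalar_prod_append[of _ N _ N], auto)
      have b1: "(p @\<^sub>v 0\<^sub>v N) \<bullet> e2 ?k = 0" unfolding e2_def
        by (subst scalar_prod_append[of _ N _ N], insert p_dim, auto)
      have b2: "(0\<^sub>v N @\<^sub>v ((1 / real N) \<cdot>\<^sub>v onev)) \<bullet> e2 ?k = 0" unfolding e2_def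
        by (subst scalar_prod_append[of _ N _ N], insert one_V[OF yv_carr], auto)
      have a: "l \<bullet> e1 ?k = 0" unfolding l_def using a1 a2 by auto
      have b: "l \<bullet> e2 ?k = 0" unfolding l_def using b1 b2 by auto
      have "map_vec complex_of_real l \<bullet> col Xm j =
         map_vec complex_of_real l \<bullet> map_vec complex_of_real (e1 ?k) + wq j * (map_vec complex_of_real l \<bullet> map_vec complex_of_real (e2 ?k))"
        unfolding colX[OF 3 j]
        by (subst scalar_prod_add_distrib[of _ "2*N"], insert lc e_carr, auto)
      also have "\<dots> = 0" using of_real_scalar[of l "e1 ?k"] of_real_scalar[of l "e2 ?k"] lc a b by simp
      finally show ?thesis unfolding rowL using i 3 j by (simp add: Em_def)
    qed
  qed
  finally show "(Lm * Xm) $$ (i,j) = Em $$ (i,j)" .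
qed (insert Xm_carr, auto simp: Em_def Lm_def)

lemma Xi_rows: assumes Xi: "Xi \<in> carrier_mat (2*N) (2*N)" "Xm * Xi = 1\<^sub>m (2*N)"
  shows "\<forall>j<2*N. Xi $$ (0,j) = (if j < N then complex_of_real (p $ j) else 0) \<and>
                 Xi $$ (1,j) = (if j < N then 0 else 1 / of_nat N)"
proof -
  have Lc: "Lm \<in> carrier_mat 2 (2*N)" by (simp add: Lm_def)
  have "Lm = Lm * (Xm * Xi)" unfolding Xi(2) using Lc by simp
  also have "\<dots> = (Lm * Xm) * Xi" by (rule assoc_mult_mat[symmetric, OF Lc Xm_carr Xi(1)])
  finally have LE: "Lm = Em * Xi" unfolding LX .
  have EX: "(Em * Xi) $$ (i,j) = Xi $$ (i,j)" if i: "i < 2" and j: "j < 2*N" for i j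
  proof -
    have "(Em * Xi) $$ (i,j) = (\<Sum>l\<in>{0..<2*N}. (if i = l then 1 else 0) * Xi $$ (l,j))"
      using i j Xi(1) by (simp add: Em_def scalar_prod_def)
    also have "\<dots> = (\<Sum>l\<in>{0..<2*N}. if l = i then Xi $$ (i,j) else 0)" by (rule sum.cong, auto)
    also have "\<dots> = Xi $$ (i,j)" using i N_pos by simp
    finally show ?thesis .
  qed
  show ?thesis
  proof (intro allI impI conjI)
    fix j assume j: "j < 2*N"
    have "Xi $$ (0,j) = Lm $$ (0,j)" using EX[of 0 j] j LE by simp
    thus "Xi $$ (0,j) = (if j < N then complex_of_real (p $ j) else 0)" using j by (simp add: Lm_def)
    have "Xi $$ (1,j) = Lm $$ (1,j)" using EX[of 1 j] j LE by simp
    thus "Xi $$ (1,j) = (if j < N then 0 else 1 / of_nat N)" using j by (simp add: Lm_def)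
  qed
qed

lemma D1_props: "D1 \<in> carrier_mat (2*N-2) (2*N-2)" "diagonal_mat D1"
  "\<forall>k\<in>{1..<N}. cmod (D1 $$ (2*k-2, 2*k-2)) = sqrt (lam k) \<and>
                  cmod (D1 $$ (2*k-1, 2*k-1)) = sqrt (lam k) \<and> sqrt (lam k) < 1"
proof -
  show "D1 \<in> carrier_mat (2*N-2) (2*N-2)" unfolding D1_def by simp
  show "diagonal_mat D1" unfolding D1_def diagonal_mat_def by simp
  show "\<forall>k\<in>{1..<N}. cmod (D1 $$ (2*k-2, 2*k-2)) = sqrt (lam k) \<and>
                  cmod (D1 $$ (2*k-1, 2*k-1)) = sqrt (lam k) \<and> sqrt (lam k) < 1"
  proof
    fix k assume "k \<in> {1..<N}"
    hence k: "1 \<le> k" "k < N" by auto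
    have l: "0 < lam k" "lam k < 1" using lam_bounds[OF k] by auto
    have s2: "(ss k)\<^sup>2 = lam k * (1 - lam k)" unfolding ss_def using l by simp
    have m: "sqrt ((lam k)\<^sup>2 + (ss k)\<^sup>2) = sqrt (lam k)" unfolding s2 by (simp add: power2_eq_square algebra_simps)
    have e0: "D1 $$ (2*k-2, 2*k-2) = Complex (lam k) (ss k)"
    proof -
      have "2*k-2+2 = 2*k" using k by simp
      thus ?thesis unfolding D1_def using k by (simp add: zq_def)
    qed
    have e1: "D1 $$ (2*k-1, 2*k-1) = Complex (lam k) (- ss k)"
    proof -
      have "2*k-1+2 = 2*k+1" using k by simp
      thus ?thesis unfolding D1_def using k by (simp add: zq_def)
    qed
    show "cmod (D1 $$ (2*k-2, 2*k-2)) = sqrt (lam k) \<and>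
                  cmod (D1 $$ (2*k-1, 2*k-1)) = sqrt (lam k) \<and> sqrt (lam k) < 1"
      unfolding e0 e1 complex_norm using m l by simp
  qed
qed

lemma main_ed2: "\<exists>(X :: complex mat) (Xi :: complex mat) (D1 :: complex mat).
              X \<in> carrier_mat (2*N) (2*N) \<and> Xi \<in> carrier_mat (2*N) (2*N) \<and>
              X * Xi = 1\<^sub>m (2*N) \<and> Xi * X = 1\<^sub>m (2*N) \<and>
              D1 \<in> carrier_mat (2*N-2) (2*N-2) \<and> diagonal_mat D1 \<and>
              Bc = X * four_block_mat (1\<^sub>m 2) (0\<^sub>m 2 (2*N-2)) (0\<^sub>m (2*N-2) 2) D1 * Xi \<and>
              (\<forall>k\<in>{1..<N}.
                  cmod (D1 $$ (2*k-2, 2*k-2)) = sqrt (lam k) \<and>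
                  cmod (D1 $$ (2*k-1, 2*k-1)) = sqrt (lam k) \<and>
                  sqrt (lam k) < 1) \<and>
              (\<forall>i<2*N. X $$ (i,0) = (if i < N then 1 else 0) \<and>
                        X $$ (i,1) = (if i < N then 0 else 1)) \<and>
              (\<forall>j<2*N. Xi $$ (0,j) = (if j < N then complex_of_real (p $ j) else 0) \<and>
                        Xi $$ (1,j) = (if j < N then 0 else 1 / of_nat N))"
proof -
  from X_inv obtain Xi where Xi: "Xi \<in> carrier_mat (2*N) (2*N)" "Xm * Xi = 1\<^sub>m (2*N)" "Xi * Xm = 1\<^sub>m (2*N)" by auto
  have cols: "\<forall>i<2*N. Xm $$ (i,0) = (if i < N then 1 else 0) \<and> Xm $$ (i,1) = (if i < N then 0 else 1)"
    using N_pos by (simp add: Xm_def)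
  show ?thesis
    by (rule exI[of _ Xm], rule exI[of _ Xi], rule exI[of _ D1],
      insert Xm_carr Xi D1_props B_decomp[OF Xi(1,2)] cols Xi_rows[OF Xi(1,2)], auto simp: DDm_def)
qed

end

theorem lemma4:
  fixes N :: nat and A U \<Sigma> :: "real mat" and p :: "real vec" and lam :: "nat \<Rightarrow> real"
  assumes A_carr: "A \<in> carrier_mat N N"
    and prim: "primitive_mat A"
    and stoch: "A\<^sup>T *\<^sub>v ones_vec N = ones_vec N"
    and p_dim: "p \<in> carrier_vec N"
    and p_fix: "A *\<^sub>v p = p"
    and p_sum: "ones_vec N \<bullet> p = 1"
    and p_pos: "\<forall>i<N. p $ i > 0"
    and balance: "diag_vec_mat N (\<lambda>i. p $ i) * A\<^sup>T = A * diag_vec_mat N (\<lambda>i. p $ i)"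
    and U_carr: "U \<in> carrier_mat N N"
    and U_orth: "U * U\<^sup>T = 1\<^sub>m N" "U\<^sup>T * U = 1\<^sub>m N"
    and Sig_carr: "\<Sigma> \<in> carrier_mat N N"
    and Sig_diag: "diagonal_mat \<Sigma>"
    and Sig_nonneg: "\<forall>i<N. \<Sigma> $$ (i,i) \<ge> 0"
    and eig_dec: "(1/2) \<cdot>\<^sub>m (diag_vec_mat N (\<lambda>i. p $ i) - A * diag_vec_mat N (\<lambda>i. p $ i))
                    = U * \<Sigma> * U\<^sup>T"
    and lam_eigs: "char_poly ((1/2) \<cdot>\<^sub>m (1\<^sub>m N + A)) = (\<Prod>k<N. [:- lam k, 1:])"
    and lam_first: "lam 0 = 1"
  shows "let P = diag_vec_mat N (\<lambda>i. p $ i);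
             Pinv = diag_vec_mat N (\<lambda>i. 1 / p $ i);
             Abar = (1/2) \<cdot>\<^sub>m (1\<^sub>m N + A);
             V = U * diag_vec_mat N (\<lambda>i. sqrt (\<Sigma> $$ (i,i))) * U\<^sup>T;
             B = four_block_mat (Abar\<^sup>T) (- (Pinv * V)) (V * Abar\<^sup>T) (1\<^sub>m N - V * Pinv * V)
         in \<exists>(X :: complex mat) (Xi :: complex mat) (D1 :: complex mat).
              X \<in> carrier_mat (2*N) (2*N) \<and> Xi \<in> carrier_mat (2*N) (2*N) \<and>
              X * Xi = 1\<^sub>m (2*N) \<and> Xi * X = 1\<^sub>m (2*N) \<and>
              D1 \<in> carrier_mat (2*N-2) (2*N-2) \<and> diagonal_mat D1 \<and>
              map_mat complex_of_real B
                = X * four_block_mat (1\<^sub>m 2) (0\<^sub>m 2 (2*N-2)) (0\<^sub>m (2*N-2) 2) D1 * Xi \<and>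
              (\<forall>k\<in>{1..<N}.
                  cmod (D1 $$ (2*k-2, 2*k-2)) = sqrt (lam k) \<and>
                  cmod (D1 $$ (2*k-1, 2*k-1)) = sqrt (lam k) \<and>
                  sqrt (lam k) < 1) \<and>
              (\<forall>i<2*N. X $$ (i,0) = (if i < N then 1 else 0) \<and>
                        X $$ (i,1) = (if i < N then 0 else 1)) \<and>
              (\<forall>j<2*N. Xi $$ (0,j) = (if j < N then complex_of_real (p $ j) else 0) \<and>
                        Xi $$ (1,j) = (if j < N then 0 else 1 / of_nat N))"
proof -
  interpret E: ed N A U \<Sigma> p lam
    by (intro ed.intro A_carr prim stoch p_dim p_fix p_sum p_pos balance U_carr U_orth Sig_carr Sig_diag Sig_nonneg eig_dec lam_eigs lam_first)
  obtain Y Yi where Y: "Y \<in> carrier_mat N N" "Yi \<in> carrier_mat N N" "Y * Yi = 1\<^sub>m N" "Yi * Y = 1\<^sub>m N"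
    "E.Abar\<^sup>T * Y = Y * diag_vec_mat N lam" using E.exists_Y by blast
  interpret E2: ed2 N A U \<Sigma> p lam Y Yi
    by (intro ed2.intro E.ed_axioms ed2_axioms.intro Y)
  show ?thesis unfolding Let_def
    using E2.main_ed2 unfolding E2.Bc_def E2.Bm_def E.Abar_def E.Pinv_def E.V_def E.Dsq_def .
qed

end
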